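(* Let $\langle X\mid R\rangle$ be an $N$-homogeneous presentation with $X$ a finite totally ordered set. (1) For all integers $n\geq0$ and $m\geq l_N(n+2)$, $F_1^{n,m}=S_0^{(m)}\wedge\cdots\wedge S^{(m)}_{m-l_N(n+2)}$. (2) For all integers $n\geq1$ and $m\geq l_N(n+1)$, $F_2^{n,m}=S^{(m)}_{m-l_N(n+1)}\vee\cdots\vee S^{(m)}_{m-N}$.
   Context: $\mathbb{K}$ is a field, $N\geq2$, $X^{(m)}$ words of length $m$, $V=\mathbb{K}X$, $V^{\otimes m}=\mathbb{K}X^{(m)}$; $R\subset V^{\otimes N}$, $\overline R=\mathrm{span}(R)$, $I(R)_j=0$ ($j<N$), $I(R)_j=\sum_{i=0}^{j-N}V^{\otimes i}\otimes\overline R\otimes V^{\otimes j-N-i}$ ($j\geq N$). $X^{(m)}$ is lexicographically ordered, $\mathrm{lm}(f)$ the greatest word in $f\neq0$; elements of $R$ have leading coefficient $1$; a word is a normal form if it has no factor $\mathrm{lm}(f)$, $f\in R$; the presentation is reduced ($\mathrm{lm}(f)-f$ is a combination of normal-form words; $\mathrm{lm}(f)$ has no factor $\mathrm{lm}(g)$, $g\in R\setminus\{f\}$). $S\in\mathrm{End}(V^{\otimes N})$: $S(\mathrm{lm}(f))=\mathrm{lm}(f)-f$, $f\in R$, $S(w)=w$ otherwise (its kernel is $\overline R$). For $m\geq N$ and $0\leq i\leq m-N$, $S_i^{(m)}=\mathrm{id}_{V^{\otimes i}}\otimes S\otimes\mathrm{id}_{V^{\otimes m-N-i}}$. $l_N(2k)=kN$,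 $l_N(2k+1)=kN+1$; $J_1=V$, $J_2=\overline R$, $J_n=\bigcap_{i=0}^{l_N(n)-N}V^{\otimes i}\otimes\overline R\otimes V^{\otimes l_N(n)-N-i}$ ($n\geq3$). A reduction operator relatively to $X^{(m)}$ is a linear projector $T$ of $V^{\otimes m}$ with each $T(w)$ equal to $w$ or a combination of words $<w$; for each subspace $W$ there is a unique one with kernel $W$, $\theta_{X^{(m)}}^{-1}(W)$. Lattice: $T_1\wedge T_2=\theta^{-1}(\ker T_1+\ker T_2)$, $T_1\vee T_2=\theta^{-1}(\ker T_1\cap\ker T_2)$ (associative). For $m\geq l_N(n)$: $F_1^{n,m}=\theta_{X^{(m)}}^{-1}(I(R)_{m-l_N(n)}\otimes V^{\otimes l_N(n)})$; $F_2^{n,m}=\mathrm{id}$ if $m<l_N(n+1)$, else $\theta_{X^{(m)}}^{-1}(V^{\otimes m-l_N(n+1)}\otimes J_{n+1})$. *)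

theory Defs
  imports Main "HOL-Library.List_Lexorder"
begin

text \<open>Words over the alphabet 'a (a finite totally ordered type) are lists; the
  lexicographic order on words of equal length is the order of List_Lexorder.
  An element of V^{\<otimes>m} = K X^{(m)} is a function from words to the field,
  vanishing outside words of length m.\<close>

definition tspace :: "nat \<Rightarrow> ('a list \<Rightarrow> 'k::field) set" where
  "tspace m = {f. \<forall>w. length w \<noteq> m \<longrightarrow> f w = 0}"

definition wd :: "'a list \<Rightarrow> 'a list \<Rightarrow> 'k::field" where
  "wd w = (\<lambda>v. if v = w then 1 else 0)"

definition lin_span :: "('a list \<Rightarrow> 'k::field) set \<Rightarrow> ('a list \<Rightarrow> 'k) set" where
  "lin_span S = {f. \<exists>B c. finite B \<and> B \<subseteq> S \<and> f = (\<lambda>v. \<Sum>b\<in>B. c b * b v)}"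

definition subsp_sum :: "('a list \<Rightarrow> 'k::field) set \<Rightarrow> ('a list \<Rightarrow> 'k) set \<Rightarrow> ('a list \<Rightarrow> 'k) set" where
  "subsp_sum W1 W2 = {(\<lambda>v. a v + b v) | a b. a \<in> W1 \<and> b \<in> W2}"

definition tens :: "nat \<Rightarrow> ('a list \<Rightarrow> 'k::field) \<Rightarrow> ('a list \<Rightarrow> 'k) \<Rightarrow> 'a list \<Rightarrow> 'k" where
  "tens a f g = (\<lambda>w. f (take a w) * g (drop a w))"

definition tensp :: "nat \<Rightarrow> ('a list \<Rightarrow> 'k::field) set \<Rightarrow> ('a list \<Rightarrow> 'k) set \<Rightarrow> ('a list \<Rightarrow> 'k) set" where
  "tensp a W1 W2 = lin_span {tens a f g | f g. f \<in> W1 \<and> g \<in> W2}"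

definition lm :: "('a::linorder list \<Rightarrow> 'k::field) \<Rightarrow> 'a list" where
  "lm f = Max {w. f w \<noteq> 0}"

definition is_factor :: "'a list \<Rightarrow> 'a list \<Rightarrow> bool" where
  "is_factor u w \<longleftrightarrow> (\<exists>p s. w = p @ u @ s)"

definition normal_form :: "('a::linorder list \<Rightarrow> 'k::field) set \<Rightarrow> 'a list \<Rightarrow> bool" where
  "normal_form R w \<longleftrightarrow> (\<forall>f\<in>R. \<not> is_factor (lm f) w)"

definition reduced_hom_pres :: "nat \<Rightarrow> ('a::linorder list \<Rightarrow> 'k::field) set \<Rightarrow> bool" where
  "reduced_hom_pres N R \<longleftrightarrow> N \<ge> 2 \<and> R \<subseteq> tspace N \<and>
     (\<forall>f\<in>R. f \<noteq> (\<lambda>_. 0) \<and> f (lm f) = 1 \<and>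
        (\<forall>v. v \<noteq> lm f \<longrightarrow> f v \<noteq> 0 \<longrightarrow> normal_form R v) \<and>
        (\<forall>g\<in>R. g \<noteq> f \<longrightarrow> \<not> is_factor (lm g) (lm f)))"

definition lin_ext :: "nat \<Rightarrow> ('a list \<Rightarrow> 'a list \<Rightarrow> 'k::field) \<Rightarrow> ('a list \<Rightarrow> 'k) \<Rightarrow> 'a list \<Rightarrow> 'k" where
  "lin_ext m img f = (\<lambda>v. \<Sum>w\<in>{w. length w = m}. f w * img w v)"

definition S_img :: "('a::linorder list \<Rightarrow> 'k::field) set \<Rightarrow> 'a list \<Rightarrow> 'a list \<Rightarrow> 'k" where
  "S_img R w = (if \<exists>f\<in>R. lm f = w
                then (\<lambda>v. wd w v - (THE f. f \<in> R \<and> lm f = w) v) else wd w)"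

definition S_op :: "nat \<Rightarrow> ('a::linorder list \<Rightarrow> 'k::field) set \<Rightarrow> ('a list \<Rightarrow> 'k) \<Rightarrow> 'a list \<Rightarrow> 'k" where
  "S_op N R = lin_ext N (S_img R)"

text \<open>S_i^{(m)} = id_{V^{\<otimes>i}} \<otimes> S \<otimes> id_{V^{\<otimes>m-N-i}}.\<close>
definition S_i :: "nat \<Rightarrow> ('a::linorder list \<Rightarrow> 'k::field) set \<Rightarrow> nat \<Rightarrow> nat \<Rightarrow> ('a list \<Rightarrow> 'k) \<Rightarrow> 'a list \<Rightarrow> 'k" where
  "S_i N R m i = lin_ext m (\<lambda>w. tens i (wd (take i w))
        (tens N (S_img R (take N (drop i w))) (wd (drop (i + N) w))))"

definition kerop :: "nat \<Rightarrow> (('a list \<Rightarrow> 'k::field) \<Rightarrow> 'a list \<Rightarrow> 'k) \<Rightarrow> ('a list \<Rightarrow> 'k) set" where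
  "kerop m T = {f \<in> tspace m. T f = (\<lambda>_. 0)}"

definition is_red_op :: "nat \<Rightarrow> (('a::linorder list \<Rightarrow> 'k::field) \<Rightarrow> 'a list \<Rightarrow> 'k) \<Rightarrow> bool" where
  "is_red_op m T \<longleftrightarrow>
     (\<forall>f\<in>tspace m. T f \<in> tspace m) \<and>
     (\<forall>f\<in>tspace m. \<forall>g\<in>tspace m. T (\<lambda>v. f v + g v) = (\<lambda>v. T f v + T g v)) \<and>
     (\<forall>c. \<forall>f\<in>tspace m. T (\<lambda>v. c * f v) = (\<lambda>v. c * T f v)) \<and>
     (\<forall>f\<in>tspace m. T (T f) = T f) \<and>
     (\<forall>w. length w = m \<longrightarrow>
        T (wd w) = wd w \<or> (\<forall>v. T (wd w) v \<noteq> 0 \<longrightarrow> v < w))"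

text \<open>theta^{-1}: the reduction operator with kernel W (unique on V^{\<otimes>m}).\<close>
definition theta_inv :: "nat \<Rightarrow> ('a::linorder list \<Rightarrow> 'k::field) set \<Rightarrow> ('a list \<Rightarrow> 'k) \<Rightarrow> 'a list \<Rightarrow> 'k" where
  "theta_inv m W = (SOME T. is_red_op m T \<and> kerop m T = W)"

definition red_meet :: "nat \<Rightarrow> (('a::linorder list \<Rightarrow> 'k::field) \<Rightarrow> 'a list \<Rightarrow> 'k)
    \<Rightarrow> (('a list \<Rightarrow> 'k) \<Rightarrow> 'a list \<Rightarrow> 'k) \<Rightarrow> ('a list \<Rightarrow> 'k) \<Rightarrow> 'a list \<Rightarrow> 'k" where
  "red_meet m T1 T2 = theta_inv m (subsp_sum (kerop m T1) (kerop m T2))"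

definition red_join :: "nat \<Rightarrow> (('a::linorder list \<Rightarrow> 'k::field) \<Rightarrow> 'a list \<Rightarrow> 'k)
    \<Rightarrow> (('a list \<Rightarrow> 'k) \<Rightarrow> 'a list \<Rightarrow> 'k) \<Rightarrow> ('a list \<Rightarrow> 'k) \<Rightarrow> 'a list \<Rightarrow> 'k" where
  "red_join m T1 T2 = theta_inv m (kerop m T1 \<inter> kerop m T2)"

text \<open>Iterated meet/join T_1 \<and> ... \<and> T_k of a nonempty list (the empty case is unused).\<close>
fun big_meet :: "nat \<Rightarrow> ((('a::linorder list \<Rightarrow> 'k::field) \<Rightarrow> 'a list \<Rightarrow> 'k)) list
    \<Rightarrow> ('a list \<Rightarrow> 'k) \<Rightarrow> 'a list \<Rightarrow> 'k" where
  "big_meet m [] = id"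
| "big_meet m [T] = T"
| "big_meet m (T # Ts) = red_meet m T (big_meet m Ts)"

fun big_join :: "nat \<Rightarrow> ((('a::linorder list \<Rightarrow> 'k::field) \<Rightarrow> 'a list \<Rightarrow> 'k)) list
    \<Rightarrow> ('a list \<Rightarrow> 'k) \<Rightarrow> 'a list \<Rightarrow> 'k" where
  "big_join m [] = id"
| "big_join m [T] = T"
| "big_join m (T # Ts) = red_join m T (big_join m Ts)"

definition lN :: "nat \<Rightarrow> nat \<Rightarrow> nat" where
  "lN N n = (if even n then (n div 2) * N else (n div 2) * N + 1)"

text \<open>Degree j component of the two-sided ideal I(R).\<close>
definition IR :: "nat \<Rightarrow> ('a list \<Rightarrow> 'k::field) set \<Rightarrow> nat \<Rightarrow> ('a list \<Rightarrow> 'k) set" where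
  "IR N R j = (if j < N then {(\<lambda>_. 0)}
     else lin_span (\<Union>i\<in>{0..j - N}. tensp i (tspace i) (tensp N (lin_span R) (tspace (j - N - i)))))"

definition J :: "nat \<Rightarrow> ('a list \<Rightarrow> 'k::field) set \<Rightarrow> nat \<Rightarrow> ('a list \<Rightarrow> 'k) set" where
  "J N R n = (if n = 1 then tspace 1 else if n = 2 then lin_span R
     else (\<Inter>i\<in>{0..lN N n - N}. tensp i (tspace i) (tensp N (lin_span R) (tspace (lN N n - N - i)))))"

definition F1 :: "nat \<Rightarrow> ('a::linorder list \<Rightarrow> 'k::field) set \<Rightarrow> nat \<Rightarrow> nat \<Rightarrow> ('a list \<Rightarrow> 'k) \<Rightarrow> 'a list \<Rightarrow> 'k" where
  "F1 N R n m = theta_inv m (tensp (m - lN N n) (IR N R (m - lN N n)) (tspace (lN N n)))"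

definition F2 :: "nat \<Rightarrow> ('a::linorder list \<Rightarrow> 'k::field) set \<Rightarrow> nat \<Rightarrow> nat \<Rightarrow> ('a list \<Rightarrow> 'k) \<Rightarrow> 'a list \<Rightarrow> 'k" where
  "F2 N R n m = (if m < lN N (n + 1) then id
     else theta_inv m (tensp (m - lN N (n + 1)) (tspace (m - lN N (n + 1))) (J N R (n + 1))))"

end

theory Submission
  imports Defs
begin



definition closed :: "('a list \<Rightarrow> 'k::field) set \<Rightarrow> bool" where
  "closed W \<longleftrightarrow> (\<lambda>_. 0) \<in> W \<and> (\<forall>f\<in>W. \<forall>g\<in>W. (\<lambda>v. f v + g v) \<in> W) \<and> (\<forall>c. \<forall>f\<in>W. (\<lambda>v. c * f v) \<in> W)"

definition subsp :: "nat \<Rightarrow> ('a list \<Rightarrow> 'k::field) set \<Rightarrow> bool" where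
  "subsp m W \<longleftrightarrow> closed W \<and> W \<subseteq> tspace m"

lemma closed_zero: "closed W \<Longrightarrow> (\<lambda>_. 0) \<in> W" by (simp add: closed_def)
lemma closed_add: "closed W \<Longrightarrow> f \<in> W \<Longrightarrow> g \<in> W \<Longrightarrow> (\<lambda>v. f v + g v) \<in> W" by (simp add: closed_def)
lemma closed_smult: "closed W \<Longrightarrow> f \<in> W \<Longrightarrow> (\<lambda>v. c * f v) \<in> W" by (simp add: closed_def)
lemma closed_neg: "closed W \<Longrightarrow> f \<in> W \<Longrightarrow> (\<lambda>v. - f v) \<in> W"
  using closed_smult[of W f "-1"] by simp
lemma closed_diff: "closed W \<Longrightarrow> f \<in> W \<Longrightarrow> g \<in> W \<Longrightarrow> (\<lambda>v. f v - g v) \<in> W"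
  using closed_add[OF _ _ closed_neg, of W f g] by simp

lemma closed_sum: assumes "closed W" shows "finite A \<Longrightarrow> (\<forall>a\<in>A. F a \<in> W) \<Longrightarrow> (\<lambda>v. \<Sum>a\<in>A. F a v) \<in> W"
proof (induction A rule: finite_induct)
  case empty thus ?case using assms by (simp add: closed_zero)
next
  case (insert x A)
  have "(\<lambda>v. F x v + (\<Sum>a\<in>A. F a v)) \<in> W"
    using insert assms by (intro closed_add) auto
  thus ?case using insert by simp
qed

lemma closed_eq: "closed W \<Longrightarrow> f \<in> W \<Longrightarrow> g = f \<Longrightarrow> g \<in> W" by simp

lemma closed_tspace: "closed (tspace m)"
  by (auto simp: closed_def tspace_def)

lemma subsp_tspace: "subsp m (tspace m)"
  by (simp add: subsp_def closed_tspace)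

lemma lin_span_sub: "S \<subseteq> lin_span S"
proof
  fix s assume "s \<in> S"
  thus "s \<in> lin_span S" unfolding lin_span_def
    by (intro CollectI exI[of _ "{s}"] exI[of _ "\<lambda>_. 1"]) auto
qed

lemma lin_span_closed: "closed (lin_span S)"
  unfolding closed_def
proof (intro conjI ballI allI)
  show "(\<lambda>_. 0) \<in> lin_span S" unfolding lin_span_def
    by (intro CollectI exI[of _ "{}"]) auto
next
  fix f g assume f: "f \<in> lin_span S" and g: "g \<in> lin_span S"
  then obtain B1 c1 B2 c2 where b1: "finite B1" "B1 \<subseteq> S" "f = (\<lambda>v. \<Sum>b\<in>B1. c1 b * b v)"
    and b2: "finite B2" "B2 \<subseteq> S" "g = (\<lambda>v. \<Sum>b\<in>B2. c2 b * b v)"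
    unfolding lin_span_def by auto
  define c where "c b = (if b \<in> B1 then c1 b else 0) + (if b \<in> B2 then c2 b else 0)" for b
  have "(\<lambda>v. f v + g v) = (\<lambda>v. \<Sum>b\<in>B1 \<union> B2. c b * b v)"
  proof
    fix v
    have "(\<Sum>b\<in>B1 \<union> B2. c b * b v) = (\<Sum>b\<in>B1 \<union> B2. (if b \<in> B1 then c1 b * b v else 0))
        + (\<Sum>b\<in>B1 \<union> B2. (if b \<in> B2 then c2 b * b v else 0))"
      unfolding sum.distrib[symmetric] by (intro sum.cong) (auto simp: c_def distrib_right)
    also have "\<dots> = f v + g v"
    proof -
      have "(\<Sum>b\<in>B1 \<union> B2. (if b \<in> B1 then c1 b * b v else 0)) = (\<Sum>b\<in>(B1 \<union> B2) \<inter> B1. c1 b * b v)"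
        by (rule sum.inter_restrict[symmetric]) (use b1 b2 in simp)
      moreover have "(\<Sum>b\<in>B1 \<union> B2. (if b \<in> B2 then c2 b * b v else 0)) = (\<Sum>b\<in>(B1 \<union> B2) \<inter> B2. c2 b * b v)"
        by (rule sum.inter_restrict[symmetric]) (use b1 b2 in simp)
      moreover have "(B1 \<union> B2) \<inter> B1 = B1" "(B1 \<union> B2) \<inter> B2 = B2" by auto
      ultimately show ?thesis using b1 b2 by simp
    qed
    finally show "f v + g v = (\<Sum>b\<in>B1 \<union> B2. c b * b v)" by simp
  qed
  thus "(\<lambda>v. f v + g v) \<in> lin_span S" unfolding lin_span_def using b1 b2
    by (intro CollectI exI[of _ "B1 \<union> B2"] exI[of _ c]) auto
next
  fix a f assume f: "f \<in> lin_span S"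
  then obtain B c where b: "finite B" "B \<subseteq> S" "f = (\<lambda>v. \<Sum>b\<in>B. c b * b v)"
    unfolding lin_span_def by auto
  have "(\<lambda>v. a * f v) = (\<lambda>v. \<Sum>b\<in>B. (a * c b) * b v)"
    using b by (simp add: sum_distrib_left mult.assoc)
  thus "(\<lambda>v. a * f v) \<in> lin_span S" unfolding lin_span_def using b
    by (intro CollectI exI[of _ B] exI[of _ "\<lambda>b. a * c b"]) auto
qed

lemma lin_span_min: "closed T \<Longrightarrow> S \<subseteq> T \<Longrightarrow> lin_span S \<subseteq> T"
proof
  fix f assume T: "closed T" "S \<subseteq> T" and "f \<in> lin_span S"
  then obtain B c where b: "finite B" "B \<subseteq> S" "f = (\<lambda>v. \<Sum>b\<in>B. c b * b v)"
    unfolding lin_span_def by auto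
  have "(\<lambda>v. \<Sum>b\<in>B. c b * b v) \<in> T"
    using b T by (intro closed_sum) (auto intro: closed_smult)
  thus "f \<in> T" using b by simp
qed

lemma lin_span_closed_eq: "closed W \<Longrightarrow> lin_span W = W"
  using lin_span_min lin_span_sub by blast

lemma lin_span_mono: "S \<subseteq> T \<Longrightarrow> lin_span S \<subseteq> lin_span T"
  by (meson lin_span_closed lin_span_min lin_span_sub order_trans)

lemma lin_span_subsp: "S \<subseteq> tspace m \<Longrightarrow> subsp m (lin_span S)"
  by (simp add: subsp_def lin_span_closed lin_span_min closed_tspace)

lemma finite_words: "finite {w::'a::finite list. length w = m}"
  using finite_lists_length_eq[of "UNIV::'a set" m] by simp

lemma tspace_expand:
  assumes "f \<in> tspace m"
  shows "(\<Sum>x\<in>{w::'a::finite list. length w = m}. f x * wd x y) = (f y :: 'k::field)"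
proof -
  have "(\<Sum>x\<in>{w::'a list. length w = m}. f x * wd x y) = (\<Sum>x\<in>{w::'a list. length w = m}. if y = x then f x else 0)"
    by (intro sum.cong) (auto simp: wd_def)
  also have "\<dots> = f y" using assms by (auto simp: sum.delta finite_words tspace_def)
  finally show ?thesis .
qed




lemma tspace_len: "f \<in> tspace m \<Longrightarrow> f v \<noteq> 0 \<Longrightarrow> length v = m"
  by (auto simp: tspace_def)

lemma wd_tspace: "length w = m \<Longrightarrow> wd w \<in> tspace m"
  by (auto simp: tspace_def wd_def)

lemma finite_supp: "f \<in> tspace m \<Longrightarrow> finite {v::'a::finite list. f v \<noteq> 0}"
  by (rule finite_subset[OF _ finite_words[of m]]) (auto simp: tspace_def)

lemma Max_supp:
  fixes f :: "'a::{finite,linorder} list \<Rightarrow> 'k::field"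
  assumes "f \<in> tspace m" "f v \<noteq> 0"
  shows "f (Max {v. f v \<noteq> 0}) \<noteq> 0" "\<And>u. f u \<noteq> 0 \<Longrightarrow> u \<le> Max {v. f v \<noteq> 0}"
  using Max_in[OF finite_supp[OF assms(1)]] Max_ge[OF finite_supp[OF assms(1)]] assms(2) by auto

section \<open>Reduction operators: elementary facts\<close>

lemma red_tspace: "is_red_op m T \<Longrightarrow> f \<in> tspace m \<Longrightarrow> T f \<in> tspace m"
  by (simp add: is_red_op_def)
lemma red_add: "is_red_op m T \<Longrightarrow> f \<in> tspace m \<Longrightarrow> g \<in> tspace m \<Longrightarrow> T (\<lambda>v. f v + g v) = (\<lambda>v. T f v + T g v)"
  by (simp add: is_red_op_def)
lemma red_smult: "is_red_op m T \<Longrightarrow> f \<in> tspace m \<Longrightarrow> T (\<lambda>v. c * f v) = (\<lambda>v. c * T f v)"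
  by (simp add: is_red_op_def)
lemma red_idem: "is_red_op m T \<Longrightarrow> f \<in> tspace m \<Longrightarrow> T (T f) = T f"
  by (simp add: is_red_op_def)
lemma red_tri: "is_red_op m T \<Longrightarrow> length w = m \<Longrightarrow>
        T (wd w) = wd w \<or> (\<forall>v. T (wd w) v \<noteq> 0 \<longrightarrow> v < w)"
  by (simp add: is_red_op_def)

lemma red_zero: "is_red_op m T \<Longrightarrow> T (\<lambda>_. 0) = (\<lambda>_. 0)"
proof -
  assume T: "is_red_op m T"
  have "T (\<lambda>v. 0 * (\<lambda>_. 0) v) = (\<lambda>v. 0 * T (\<lambda>_. 0) v)"
    by (rule red_smult[OF T closed_zero[OF closed_tspace]])
  thus ?thesis by simp
qed

lemma red_diff: "is_red_op m T \<Longrightarrow> f \<in> tspace m \<Longrightarrow> g \<in> tspace m \<Longrightarrow> T (\<lambda>v. f v - g v) = (\<lambda>v. T f v - T g v)"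
proof -
  assume a: "is_red_op m T" "f \<in> tspace m" "g \<in> tspace m"
  have g': "(\<lambda>v. (-1) * g v) \<in> tspace m" using a closed_smult[OF closed_tspace] by blast
  have "T (\<lambda>v. f v - g v) = T (\<lambda>v. f v + (\<lambda>v. (-1) * g v) v)" by simp
  also have "\<dots> = (\<lambda>v. T f v + T (\<lambda>v. (-1) * g v) v)" using red_add[OF a(1,2) g'] .
  also have "\<dots> = (\<lambda>v. T f v - T g v)" using red_smult[OF a(1,3), of "-1"] by simp
  finally show ?thesis .
qed

lemma red_sum:
  assumes T: "is_red_op m T"
  shows "finite A \<Longrightarrow> (\<forall>a\<in>A. F a \<in> tspace m) \<Longrightarrow> T (\<lambda>v. \<Sum>a\<in>A. F a v) = (\<lambda>v. \<Sum>a\<in>A. T (F a) v)"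
proof (induction A rule: finite_induct)
  case empty thus ?case using red_zero[OF T] by simp
next
  case (insert x A)
  have s: "(\<lambda>v. \<Sum>a\<in>A. F a v) \<in> tspace m"
    by (rule closed_sum[OF closed_tspace]) (use insert in auto)
  have "T (\<lambda>v. \<Sum>a\<in>insert x A. F a v) = T (\<lambda>v. F x v + (\<lambda>v. \<Sum>a\<in>A. F a v) v)"
    using insert by simp
  also have "\<dots> = (\<lambda>v. T (F x) v + T (\<lambda>v. \<Sum>a\<in>A. F a v) v)"
    using red_add[OF T _ s, of "F x"] insert by simp
  finally show ?case using insert by simp
qed

lemma red_expand:
  fixes T :: "('a::{finite,linorder} list \<Rightarrow> 'k::field) \<Rightarrow> 'a list \<Rightarrow> 'k"
  assumes T: "is_red_op m T" and f: "f \<in> tspace m"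
  shows "T f u = (\<Sum>v\<in>{w. length w = m}. f v * T (wd v) u)"
proof -
  have "f = (\<lambda>u. \<Sum>v\<in>{w. length w = m}. (\<lambda>u. f v * wd v u) u)"
    using tspace_expand[OF f] by auto
  hence "T f = T (\<lambda>u. \<Sum>v\<in>{w. length w = m}. (\<lambda>u. f v * wd v u) u)" by simp
  also have "\<dots> = (\<lambda>u. \<Sum>v\<in>{w. length w = m}. T (\<lambda>u. f v * wd v u) u)"
    by (rule red_sum[OF T finite_words]) (auto intro: closed_smult[OF closed_tspace wd_tspace])
  also have "\<dots> = (\<lambda>u. \<Sum>v\<in>{w. length w = m}. f v * T (wd v) u)"
    using red_smult[OF T wd_tspace] by simp
  finally show ?thesis by simp
qed

lemma red_ker_closed: "is_red_op m T \<Longrightarrow> subsp m (kerop m T)"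
proof -
  assume T: "is_red_op m T"
  show ?thesis unfolding subsp_def closed_def
  proof (intro conjI ballI allI)
    show "(\<lambda>_. 0) \<in> kerop m T" using red_zero[OF T] closed_zero[OF closed_tspace]
      by (simp add: kerop_def)
  next
    fix f g assume "f \<in> kerop m T" "g \<in> kerop m T"
    thus "(\<lambda>v. f v + g v) \<in> kerop m T" using red_add[OF T, of f g] closed_add[OF closed_tspace, of f m g]
      by (simp add: kerop_def)
  next
    fix c f assume "f \<in> kerop m T"
    thus "(\<lambda>v. c * f v) \<in> kerop m T" using red_smult[OF T, of f c] closed_smult[OF closed_tspace, of f m c]
      by (simp add: kerop_def)
  qed (auto simp: kerop_def)
qed

lemma red_resid: "is_red_op m T \<Longrightarrow> f \<in> tspace m \<Longrightarrow> (\<lambda>v. f v - T f v) \<in> kerop m T"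
  unfolding kerop_def
  using red_diff[of m T f "T f"] red_tspace[of m T f] red_idem[of m T f]
    closed_diff[OF closed_tspace] by auto

lemma red_KL:
  fixes T :: "('a::{finite,linorder} list \<Rightarrow> 'k::field) \<Rightarrow> 'a list \<Rightarrow> 'k"
  assumes T: "is_red_op m T" and v: "length v = m" "v < w"
  shows "T (wd v) w = 0"
proof (cases "T (wd v) = wd v")
  case True thus ?thesis using v(2) by (simp add: wd_def)
next
  case False
  hence "\<forall>u. T (wd v) u \<noteq> 0 \<longrightarrow> u < v" using red_tri[OF T v(1)] by blast
  thus ?thesis using v(2) less_asym by blast
qed

lemma red_KL2:
  fixes T :: "('a::{finite,linorder} list \<Rightarrow> 'k::field) \<Rightarrow> 'a list \<Rightarrow> 'k"
  assumes T: "is_red_op m T" and v: "length w = m" "T (wd w) \<noteq> wd w"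
  shows "T (wd w) w = 0"
proof -
  have "\<forall>u. T (wd w) u \<noteq> 0 \<longrightarrow> u < w" using red_tri[OF T v(1)] v(2) by blast
  thus ?thesis by blast
qed

definition Lw :: "nat \<Rightarrow> ('a::linorder list \<Rightarrow> 'k::field) set \<Rightarrow> 'a list \<Rightarrow> bool" where
  "Lw m W w \<longleftrightarrow> (\<exists>h\<in>W. h w \<noteq> 0 \<and> (\<forall>v. h v \<noteq> 0 \<longrightarrow> v \<le> w))"

lemma red_nonfix_L:
  fixes T :: "('a::{finite,linorder} list \<Rightarrow> 'k::field) \<Rightarrow> 'a list \<Rightarrow> 'k"
  assumes T: "is_red_op m T" and w: "length w = m" "T (wd w) \<noteq> wd w"
  shows "Lw m (kerop m T) w"
proof -
  let ?h = "\<lambda>v. wd w v - T (wd w) v"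
  have "?h \<in> kerop m T" using red_resid[OF T wd_tspace[OF w(1)]] .
  moreover have "?h w \<noteq> 0" using red_KL2[OF T w] by (simp add: wd_def)
  moreover have "\<forall>v. ?h v \<noteq> 0 \<longrightarrow> v \<le> w"
  proof (intro allI impI)
    fix v assume hv: "?h v \<noteq> 0"
    have tri: "\<forall>u. T (wd w) u \<noteq> 0 \<longrightarrow> u < w" using red_tri[OF T w(1)] w(2) by blast
    show "v \<le> w"
    proof (cases "v = w")
      case False
      hence "T (wd w) v \<noteq> 0" using hv by (simp add: wd_def)
      thus ?thesis using tri by (simp add: less_imp_le)
    qed simp
  qed
  ultimately show ?thesis unfolding Lw_def by (intro bexI[where x="?h"]) auto
qed

lemma red_fix_notL:
  fixes T :: "('a::{finite,linorder} list \<Rightarrow> 'k::field) \<Rightarrow> 'a list \<Rightarrow> 'k"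
  assumes T: "is_red_op m T" and w: "length w = m" "T (wd w) = wd w"
  shows "\<not> Lw m (kerop m T) w"
proof
  assume "Lw m (kerop m T) w"
  then obtain h where h: "h \<in> kerop m T" "h w \<noteq> 0" "\<forall>v. h v \<noteq> 0 \<longrightarrow> v \<le> w"
    unfolding Lw_def by blast
  have ht: "h \<in> tspace m" "T h = (\<lambda>_. 0)" using h(1) by (auto simp: kerop_def)
  have "T h w = (\<Sum>v\<in>{u. length u = m}. h v * T (wd v) w)" using red_expand[OF T ht(1)] .
  also have "\<dots> = (\<Sum>v\<in>{u. length u = m}. if v = w then h w else 0)"
  proof (intro sum.cong refl)
    fix v :: "'a list" assume v: "v \<in> {u. length u = m}"
    show "h v * T (wd v) w = (if v = w then h w else 0)"
    proof (cases "v = w")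
      case True thus ?thesis using w by (simp add: wd_def)
    next
      case False
      hence "h v = 0 \<or> v < w" using h(3) by force
      thus ?thesis using red_KL[OF T, of v w] v False by auto
    qed
  qed
  also have "\<dots> = h w" using w(1) by (simp add: finite_words)
  finally show False using ht(2) h(2) by simp
qed

lemma red_fix_char:
  fixes T :: "('a::{finite,linorder} list \<Rightarrow> 'k::field) \<Rightarrow> 'a list \<Rightarrow> 'k"
  assumes T: "is_red_op m T" and w: "length w = m"
  shows "T (wd w) = wd w \<longleftrightarrow> \<not> Lw m (kerop m T) w"
  using red_nonfix_L[OF T w] red_fix_notL[OF T w] by blast

lemma red_fixed_supp:
  fixes T :: "('a::{finite,linorder} list \<Rightarrow> 'k::field) \<Rightarrow> 'a list \<Rightarrow> 'k"
  assumes T: "is_red_op m T" and g: "g \<in> tspace m" "T g = g" and gw: "g w \<noteq> 0"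
  shows "T (wd w) = wd w"
proof (rule ccontr)
  assume nw: "T (wd w) \<noteq> wd w"
  let ?B = "{w. g w \<noteq> 0 \<and> T (wd w) \<noteq> wd w}"
  have finB: "finite ?B" using finite_supp[OF g(1)] by (rule finite_subset[rotated]) auto
  have "w \<in> ?B" using nw gw by simp
  hence B0: "Max ?B \<in> ?B" and Bge: "\<And>u. u \<in> ?B \<Longrightarrow> u \<le> Max ?B"
    using finB Max_in[OF finB] Max_ge[OF finB] by blast+
  define w0 where "w0 = Max ?B"
  have w0: "g w0 \<noteq> 0" "T (wd w0) \<noteq> wd w0" "length w0 = m"
    using B0 tspace_len[OF g(1)] unfolding w0_def by auto
  have "T g w0 = (\<Sum>v\<in>{u. length u = m}. g v * T (wd v) w0)" using red_expand[OF T g(1)] .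
  also have "\<dots> = 0"
  proof (rule sum.neutral, rule ballI)
    fix v :: "'a list" assume v: "v \<in> {u. length u = m}"
    show "g v * T (wd v) w0 = 0"
    proof (cases "g v = 0")
      case False
      show ?thesis
      proof (cases v w0 rule: linorder_cases)
        case less thus ?thesis using red_KL[OF T, of v w0] v by simp
      next
        case equal thus ?thesis using red_KL2[OF T w0(3) w0(2)] by simp
      next
        case greater
        hence "v \<notin> ?B" using Bge unfolding w0_def by force
        hence "T (wd v) = wd v" using False by simp
        thus ?thesis using greater by (auto simp: wd_def)
      qed
    qed simp
  qed
  finally show False using g(2) w0(1) by simp
qed

theorem red_unique:
  fixes T1 :: "('a::{finite,linorder} list \<Rightarrow> 'k::field) \<Rightarrow> 'a list \<Rightarrow> 'k"
  assumes T1: "is_red_op m T1" and T2: "is_red_op m T2" and K: "kerop m T1 = kerop m T2"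
    and f: "f \<in> tspace m"
  shows "T1 f = T2 f"
proof (rule ccontr)
  assume ne: "T1 f \<noteq> T2 f"
  define d where "d = (\<lambda>v. T1 f v - T2 f v)"
  let ?K = "kerop m T1"
  have Kc: "closed ?K" using red_ker_closed[OF T1] by (simp add: subsp_def)
  have r1: "(\<lambda>v. f v - T1 f v) \<in> ?K" by (rule red_resid[OF T1 f])
  have r2: "(\<lambda>v. f v - T2 f v) \<in> ?K" using red_resid[OF T2 f] K by simp
  have "(\<lambda>v. (\<lambda>v. f v - T2 f v) v - (\<lambda>v. f v - T1 f v) v) \<in> ?K"
    by (rule closed_diff[OF Kc r2 r1])
  moreover have "(\<lambda>v. (\<lambda>v. f v - T2 f v) v - (\<lambda>v. f v - T1 f v) v) = d"
    unfolding d_def by (rule ext) simp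
  ultimately have dK: "d \<in> ?K" by simp
  have dt: "d \<in> tspace m" using dK by (simp add: kerop_def)
  obtain w where dw: "d w \<noteq> 0"
  proof -
    have "\<exists>w. T1 f w \<noteq> T2 f w" using ne by (meson ext)
    then obtain w where "T1 f w \<noteq> T2 f w" by blast
    thus ?thesis using that[of w] unfolding d_def by simp
  qed
  note M = Max_supp[OF dt dw]
  define w0 where "w0 = Max {v. d v \<noteq> 0}"
  have w0: "d w0 \<noteq> 0" "\<And>u. d u \<noteq> 0 \<Longrightarrow> u \<le> w0" using M unfolding w0_def by auto
  have lw0: "length w0 = m" using tspace_len[OF dt w0(1)] .
  have L: "Lw m ?K w0" unfolding Lw_def using dK w0 by (intro bexI[where x=d]) auto
  have "T1 f w0 \<noteq> 0 \<or> T2 f w0 \<noteq> 0" using w0(1) unfolding d_def by auto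
  hence "T1 (wd w0) = wd w0 \<or> T2 (wd w0) = wd w0"
  proof
    assume "T1 f w0 \<noteq> 0" thus ?thesis using red_fixed_supp[OF T1 red_tspace[OF T1 f] red_idem[OF T1 f]] by simp
  next
    assume "T2 f w0 \<noteq> 0" thus ?thesis using red_fixed_supp[OF T2 red_tspace[OF T2 f] red_idem[OF T2 f]] by simp
  qed
  moreover have "\<not> Lw m (kerop m T2) w0" if "T2 (wd w0) = wd w0" using red_fix_notL[OF T2 lw0 that] .
  moreover have "\<not> Lw m (kerop m T1) w0" if "T1 (wd w0) = wd w0" using red_fix_notL[OF T1 lw0 that] .
  ultimately show False using L K by metis
qed




context
  fixes W :: "('a::{finite,linorder} list \<Rightarrow> 'k::field) set" and m :: nat
  assumes W: "subsp m W"
begin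

definition PP :: "('a list \<Rightarrow> 'k) set" where
  "PP = {p \<in> tspace m. \<forall>v. p v \<noteq> 0 \<longrightarrow> \<not> Lw m W v}"

lemma Wc: "closed W" using W by (simp add: subsp_def)
lemma Wt: "W \<subseteq> tspace m" using W by (simp add: subsp_def)

lemma PP_closed: "closed PP"
  unfolding closed_def PP_def using closed_tspace[of m]
  by (auto simp: closed_def) (metis add.right_neutral add_0 mult_zero_right)+

lemma PP_W: "p \<in> PP \<Longrightarrow> p \<in> W \<Longrightarrow> p v = 0"
proof (rule ccontr)
  assume p: "p \<in> PP" "p \<in> W" "p v \<noteq> 0"
  have pt: "p \<in> tspace m" using p(1) by (simp add: PP_def)
  note M = Max_supp[OF pt p(3)]
  have "Lw m W (Max {v. p v \<noteq> 0})" unfolding Lw_def using M p(2) by (intro bexI[where x=p]) auto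
  thus False using p(1) M(1) by (simp add: PP_def)
qed

lemma decomp_aux:
  "\<forall>B g. card {v::'a list. length v = m \<and> v \<le> B} \<le> n \<longrightarrow> g \<in> tspace m \<longrightarrow> (\<forall>v. g v \<noteq> 0 \<longrightarrow> v \<le> B)
     \<longrightarrow> (\<exists>p\<in>PP. (\<lambda>v. g v - p v) \<in> W \<and> (\<forall>v. p v \<noteq> 0 \<longrightarrow> v \<le> B))"
proof (induction n)
  case 0
  show ?case
  proof (intro allI impI)
    fix B :: "'a list" and g :: "'a list \<Rightarrow> 'k" assume c: "card {v::'a list. length v = m \<and> v \<le> B} \<le> 0" and g: "g \<in> tspace m"
      and gB: "\<forall>v. g v \<noteq> 0 \<longrightarrow> v \<le> B"
    have fin: "finite {v::'a list. length v = m \<and> v \<le> B}" by (rule finite_subset[OF _ finite_words[of m]]) auto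
    have "{v::'a list. length v = m \<and> v \<le> B} = {}" using c fin by simp
    hence g0: "g = (\<lambda>_. 0)" using g gB by (auto simp: tspace_def)
    have "(\<lambda>_. 0) \<in> PP" by (rule closed_zero[OF PP_closed])
    thus "\<exists>p\<in>PP. (\<lambda>v. g v - p v) \<in> W \<and> (\<forall>v. p v \<noteq> 0 \<longrightarrow> v \<le> B)"
      using g0 closed_zero[OF Wc] by (intro bexI[where x="\<lambda>_. 0"]) auto
  qed
next
  case (Suc n)
  show ?case
  proof (intro allI impI)
    fix B :: "'a list" and g :: "'a list \<Rightarrow> 'k" assume c: "card {v::'a list. length v = m \<and> v \<le> B} \<le> Suc n" and g: "g \<in> tspace m"
      and gB: "\<forall>v. g v \<noteq> 0 \<longrightarrow> v \<le> B"
    show "\<exists>p\<in>PP. (\<lambda>v. g v - p v) \<in> W \<and> (\<forall>v. p v \<noteq> 0 \<longrightarrow> v \<le> B)"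
    proof (cases "\<forall>v. g v = 0")
      case True
      hence g0: "g = (\<lambda>_. 0)" by auto
      have "(\<lambda>_. 0) \<in> PP" by (rule closed_zero[OF PP_closed])
      thus ?thesis using g0 closed_zero[OF Wc] by (intro bexI[where x="\<lambda>_. 0"]) auto
    next
      case False
      then obtain v0 where v0: "g v0 \<noteq> 0" by auto
      note M = Max_supp[OF g v0]
      define w where "w = Max {v. g v \<noteq> 0}"
      have w: "g w \<noteq> 0" "\<And>u. g u \<noteq> 0 \<Longrightarrow> u \<le> w" using M unfolding w_def by auto
      have lw: "length w = m" using tspace_len[OF g w(1)] .
      have wB: "w \<le> B" using gB w(1) by blast
      have IHw: "\<exists>p\<in>PP. (\<lambda>v. g' v - p v) \<in> W \<and> (\<forall>v. p v \<noteq> 0 \<longrightarrow> v < w)"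
        if g': "g' \<in> tspace m" "\<forall>v. g' v \<noteq> 0 \<longrightarrow> v < w" for g'
      proof (cases "\<forall>v. g' v = 0")
        case True
        hence g0: "g' = (\<lambda>_. 0)" by auto
        have "(\<lambda>_. 0) \<in> PP" by (rule closed_zero[OF PP_closed])
        thus ?thesis using g0 closed_zero[OF Wc] by (intro bexI[where x="\<lambda>_. 0"]) auto
      next
        case False
        then obtain u0 where u0: "g' u0 \<noteq> 0" by auto
        note M' = Max_supp[OF g'(1) u0]
        define B' where "B' = Max {v. g' v \<noteq> 0}"
        have B': "g' B' \<noteq> 0" "\<And>u. g' u \<noteq> 0 \<Longrightarrow> u \<le> B'" using M' unfolding B'_def by auto
        have B'w: "B' < w" using g'(2) B'(1) by blast
        have fin: "finite {v::'a list. length v = m \<and> v \<le> B}" by (rule finite_subset[OF _ finite_words[of m]]) auto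
        have sub: "{v::'a list. length v = m \<and> v \<le> B'} \<subset> {v::'a list. length v = m \<and> v \<le> B}"
        proof
          show "{v::'a list. length v = m \<and> v \<le> B'} \<subseteq> {v::'a list. length v = m \<and> v \<le> B}"
            using B'w wB by auto
          have "w \<in> {v::'a list. length v = m \<and> v \<le> B}" "w \<notin> {v::'a list. length v = m \<and> v \<le> B'}"
            using B'w wB lw by auto
          thus "{v::'a list. length v = m \<and> v \<le> B'} \<noteq> {v::'a list. length v = m \<and> v \<le> B}" by blast
        qed
        have "card {v::'a list. length v = m \<and> v \<le> B'} < card {v::'a list. length v = m \<and> v \<le> B}"
          by (rule psubset_card_mono[OF fin sub])
        hence "card {v::'a list. length v = m \<and> v \<le> B'} \<le> n" using c by simp
        then obtain p where p: "p \<in> PP" "(\<lambda>v. g' v - p v) \<in> W" "\<forall>v. p v \<noteq> 0 \<longrightarrow> v \<le> B'"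
          using Suc.IH g'(1) B'(2) by blast
        show ?thesis using p B'w by (intro bexI[where x=p]) (auto intro: le_less_trans)
      qed
      show "\<exists>p\<in>PP. (\<lambda>v. g v - p v) \<in> W \<and> (\<forall>v. p v \<noteq> 0 \<longrightarrow> v \<le> B)"
      proof (cases "Lw m W w")
        case True
        then obtain h where h: "h \<in> W" "h w \<noteq> 0" "\<forall>v. h v \<noteq> 0 \<longrightarrow> v \<le> w" unfolding Lw_def by blast
        define c where "c = g w / h w"
        define g' where "g' = (\<lambda>v. g v - c * h v)"
        have ch: "(\<lambda>v. c * h v) \<in> W" by (rule closed_smult[OF Wc h(1)])
        have g't: "g' \<in> tspace m" unfolding g'_def
          by (rule closed_diff[OF closed_tspace g]) (use ch Wt in blast)
        have g's: "\<forall>v. g' v \<noteq> 0 \<longrightarrow> v < w"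
        proof (intro allI impI)
          fix v assume "g' v \<noteq> 0"
          hence "g v \<noteq> 0 \<or> h v \<noteq> 0" unfolding g'_def by auto
          hence "v \<le> w" using w(2) h(3) by blast
          moreover have "g' w = 0" unfolding g'_def c_def using h(2) by simp
          ultimately show "v < w" using \<open>g' v \<noteq> 0\<close> by (cases "v = w") auto
        qed
        obtain p where p: "p \<in> PP" "(\<lambda>v. g' v - p v) \<in> W" "\<forall>v. p v \<noteq> 0 \<longrightarrow> v < w"
          using IHw[OF g't g's] by blast
        have "(\<lambda>v. (\<lambda>v. g' v - p v) v + (\<lambda>v. c * h v) v) \<in> W" by (rule closed_add[OF Wc p(2) ch])
        moreover have "(\<lambda>v. (\<lambda>v. g' v - p v) v + (\<lambda>v. c * h v) v) = (\<lambda>v. g v - p v)"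
          unfolding g'_def by (rule ext) simp
        ultimately have "(\<lambda>v. g v - p v) \<in> W" by simp
        thus ?thesis using p wB by (intro bexI[where x=p]) (auto dest: order.strict_trans2)
      next
        case False
        define g' where "g' = (\<lambda>v. g v - g w * wd w v)"
        have g't: "g' \<in> tspace m" unfolding g'_def
          by (rule closed_diff[OF closed_tspace g closed_smult[OF closed_tspace wd_tspace[OF lw]]])
        have g's: "\<forall>v. g' v \<noteq> 0 \<longrightarrow> v < w"
        proof (intro allI impI)
          fix v assume "g' v \<noteq> 0"
          moreover have "g' w = 0" unfolding g'_def by (simp add: wd_def)
          moreover have "g v \<noteq> 0" using \<open>g' v \<noteq> 0\<close> \<open>g' w = 0\<close> unfolding g'_def by (auto simp: wd_def split: if_splits)
          ultimately show "v < w" using w(2) by (cases "v = w") (auto simp: order.order_iff_strict)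
        qed
        obtain p where p: "p \<in> PP" "(\<lambda>v. g' v - p v) \<in> W" "\<forall>v. p v \<noteq> 0 \<longrightarrow> v < w"
          using IHw[OF g't g's] by blast
        have wP: "(\<lambda>v. g w * wd w v) \<in> PP"
          unfolding PP_def using False closed_smult[OF closed_tspace wd_tspace[OF lw]]
          by (auto simp: wd_def split: if_splits)
        define p' where "p' = (\<lambda>v. p v + (\<lambda>v. g w * wd w v) v)"
        have p'P: "p' \<in> PP" unfolding p'_def by (rule closed_add[OF PP_closed p(1) wP])
        have "(\<lambda>v. g v - p' v) = (\<lambda>v. g' v - p v)" unfolding p'_def g'_def by (rule ext) simp
        hence "(\<lambda>v. g v - p' v) \<in> W" using p(2) by simp
        moreover have "\<forall>v. p' v \<noteq> 0 \<longrightarrow> v \<le> B"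
        proof (intro allI impI)
          fix v assume "p' v \<noteq> 0"
          hence "p v \<noteq> 0 \<or> v = w" unfolding p'_def by (auto simp: wd_def split: if_splits)
          thus "v \<le> B" using p(3) wB by (auto dest: order.strict_trans2)
        qed
        ultimately show ?thesis using p'P by blast
      qed
    qed
  qed
qed

lemma decomp:
  assumes g: "g \<in> tspace m"
  shows "\<exists>p\<in>PP. (\<lambda>v. g v - p v) \<in> W \<and> (\<forall>v. p v \<noteq> 0 \<longrightarrow> (\<exists>u. g u \<noteq> 0 \<and> v \<le> u))"
proof (cases "\<forall>v. g v = 0")
  case True
  hence g0: "g = (\<lambda>_. 0)" by auto
  have "(\<lambda>_. 0) \<in> PP" by (rule closed_zero[OF PP_closed])
  thus ?thesis using g0 closed_zero[OF Wc] by (intro bexI[where x="\<lambda>_. 0"]) auto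
next
  case False
  then obtain v0 where v0: "g v0 \<noteq> 0" by auto
  note M = Max_supp[OF g v0]
  define B where "B = Max {v. g v \<noteq> 0}"
  have B: "g B \<noteq> 0" "\<And>u. g u \<noteq> 0 \<Longrightarrow> u \<le> B" using M unfolding B_def by auto
  obtain p where p: "p \<in> PP" "(\<lambda>v. g v - p v) \<in> W" "\<forall>v. p v \<noteq> 0 \<longrightarrow> v \<le> B"
    using decomp_aux[of "card {v::'a list. length v = m \<and> v \<le> B}"] g B(2) by blast
  show ?thesis using p B(1) by (intro bexI[where x=p]) auto
qed

definition TT :: "('a list \<Rightarrow> 'k) \<Rightarrow> 'a list \<Rightarrow> 'k" where
  "TT g = (THE p. p \<in> PP \<and> (\<lambda>v. g v - p v) \<in> W)"

lemma PP_uniq: "p1 \<in> PP \<Longrightarrow> p2 \<in> PP \<Longrightarrow> (\<lambda>v. g v - p1 v) \<in> W \<Longrightarrow> (\<lambda>v. g v - p2 v) \<in> W \<Longrightarrow> p1 = p2"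
proof -
  assume a: "p1 \<in> PP" "p2 \<in> PP" "(\<lambda>v. g v - p1 v) \<in> W" "(\<lambda>v. g v - p2 v) \<in> W"
  have "(\<lambda>v. (\<lambda>v. g v - p2 v) v - (\<lambda>v. g v - p1 v) v) \<in> W" by (rule closed_diff[OF Wc a(4) a(3)])
  moreover have "(\<lambda>v. (\<lambda>v. g v - p2 v) v - (\<lambda>v. g v - p1 v) v) = (\<lambda>v. p1 v - p2 v)" by (rule ext) simp
  ultimately have W': "(\<lambda>v. p1 v - p2 v) \<in> W" by simp
  have P': "(\<lambda>v. p1 v - p2 v) \<in> PP" by (rule closed_diff[OF PP_closed a(1) a(2)])
  show "p1 = p2"
  proof
    fix v show "p1 v = p2 v" using PP_W[OF P' W', of v] by simp
  qed
qed

lemma TT_eq: "g \<in> tspace m \<Longrightarrow> p \<in> PP \<Longrightarrow> (\<lambda>v. g v - p v) \<in> W \<Longrightarrow> TT g = p"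
  unfolding TT_def by (rule the_equality) (auto intro: PP_uniq)

lemma TT_prop: "g \<in> tspace m \<Longrightarrow> TT g \<in> PP \<and> (\<lambda>v. g v - TT g v) \<in> W"
proof -
  assume g: "g \<in> tspace m"
  obtain p where p: "p \<in> PP" "(\<lambda>v. g v - p v) \<in> W" using decomp[OF g] by blast
  show ?thesis using TT_eq[OF g p] p by simp
qed

lemma PP_t: "p \<in> PP \<Longrightarrow> p \<in> tspace m" by (simp add: PP_def)

lemma TT_red: "is_red_op m TT"
  unfolding is_red_op_def
proof (intro conjI ballI allI impI)
  fix f :: "'a list \<Rightarrow> 'k" assume f: "f \<in> tspace m"
  show "TT f \<in> tspace m" using TT_prop[OF f] PP_t by blast
next
  fix f g :: "'a list \<Rightarrow> 'k" assume f: "f \<in> tspace m" and g: "g \<in> tspace m"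
  have fg: "(\<lambda>v. f v + g v) \<in> tspace m" by (rule closed_add[OF closed_tspace f g])
  have Pf: "TT f \<in> PP" "(\<lambda>v. f v - TT f v) \<in> W" using TT_prop[OF f] by auto
  have Pg: "TT g \<in> PP" "(\<lambda>v. g v - TT g v) \<in> W" using TT_prop[OF g] by auto
  have "(\<lambda>v. (\<lambda>v. f v - TT f v) v + (\<lambda>v. g v - TT g v) v) \<in> W" by (rule closed_add[OF Wc Pf(2) Pg(2)])
  moreover have "(\<lambda>v. (\<lambda>v. f v - TT f v) v + (\<lambda>v. g v - TT g v) v) = (\<lambda>v. (f v + g v) - (TT f v + TT g v))"
    by (rule ext) simp
  ultimately have "(\<lambda>v. (f v + g v) - (TT f v + TT g v)) \<in> W" by simp
  thus "TT (\<lambda>v. f v + g v) = (\<lambda>v. TT f v + TT g v)"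
    using TT_eq[OF fg closed_add[OF PP_closed Pf(1) Pg(1)]] by simp
next
  fix c :: 'k and f :: "'a list \<Rightarrow> 'k" assume f: "f \<in> tspace m"
  have cf: "(\<lambda>v. c * f v) \<in> tspace m" by (rule closed_smult[OF closed_tspace f])
  have Pf: "TT f \<in> PP" "(\<lambda>v. f v - TT f v) \<in> W" using TT_prop[OF f] by auto
  have "(\<lambda>v. c * (\<lambda>v. f v - TT f v) v) \<in> W" by (rule closed_smult[OF Wc Pf(2)])
  moreover have "(\<lambda>v. c * (\<lambda>v. f v - TT f v) v) = (\<lambda>v. c * f v - c * TT f v)"
    by (rule ext) (simp add: right_diff_distrib)
  ultimately have "(\<lambda>v. c * f v - c * TT f v) \<in> W" by simp
  thus "TT (\<lambda>v. c * f v) = (\<lambda>v. c * TT f v)"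
    using TT_eq[OF cf closed_smult[OF PP_closed Pf(1)]] by simp
next
  fix f :: "'a list \<Rightarrow> 'k" assume f: "f \<in> tspace m"
  have Pf: "TT f \<in> PP" using TT_prop[OF f] by auto
  show "TT (TT f) = TT f"
    using TT_eq[OF PP_t[OF Pf] Pf] closed_zero[OF Wc] by simp
next
  fix w :: "'a list" assume lw: "length w = m"
  show "TT (wd w) = wd w \<or> (\<forall>v. TT (wd w) v \<noteq> 0 \<longrightarrow> v < w)"
  proof (cases "Lw m W w")
    case False
    have "wd w \<in> PP" unfolding PP_def using False wd_tspace[OF lw] by (auto simp: wd_def split: if_splits)
    thus ?thesis using TT_eq[OF wd_tspace[OF lw]] closed_zero[OF Wc] by simp
  next
    case True
    then obtain h where h: "h \<in> W" "h w \<noteq> 0" "\<forall>v. h v \<noteq> 0 \<longrightarrow> v \<le> w" unfolding Lw_def by blast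
    define c where "c = 1 / h w"
    define r where "r = (\<lambda>v. wd w v - c * h v)"
    have ch: "(\<lambda>v. c * h v) \<in> W" by (rule closed_smult[OF Wc h(1)])
    have rt: "r \<in> tspace m" unfolding r_def
      by (rule closed_diff[OF closed_tspace wd_tspace[OF lw]]) (use ch Wt in blast)
    have rs: "\<forall>v. r v \<noteq> 0 \<longrightarrow> v < w"
    proof (intro allI impI)
      fix v assume rv: "r v \<noteq> 0"
      have "r w = 0" unfolding r_def c_def using h(2) by (simp add: wd_def)
      hence "v \<noteq> w" using rv by auto
      hence "h v \<noteq> 0" using rv unfolding r_def by (simp add: wd_def)
      hence "v \<le> w" using h(3) by blast
      thus "v < w" using \<open>v \<noteq> w\<close> by simp
    qed
    obtain p where p: "p \<in> PP" "(\<lambda>v. r v - p v) \<in> W" "\<forall>v. p v \<noteq> 0 \<longrightarrow> (\<exists>u. r u \<noteq> 0 \<and> v \<le> u)"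
      using decomp[OF rt] by blast
    have "(\<lambda>v. (\<lambda>v. r v - p v) v + (\<lambda>v. c * h v) v) \<in> W" by (rule closed_add[OF Wc p(2) ch])
    moreover have "(\<lambda>v. (\<lambda>v. r v - p v) v + (\<lambda>v. c * h v) v) = (\<lambda>v. wd w v - p v)"
      unfolding r_def by (rule ext) simp
    ultimately have "(\<lambda>v. wd w v - p v) \<in> W" by simp
    hence "TT (wd w) = p" using TT_eq[OF wd_tspace[OF lw] p(1)] by simp
    moreover have "\<forall>v. p v \<noteq> 0 \<longrightarrow> v < w"
      using p(3) rs by (meson le_less_trans)
    ultimately show ?thesis by simp
  qed
qed

lemma TT_ker: "kerop m TT = W"
proof
  show "kerop m TT \<subseteq> W"
  proof
    fix f assume "f \<in> kerop m TT"
    hence f: "f \<in> tspace m" "TT f = (\<lambda>_. 0)" by (auto simp: kerop_def)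
    have "(\<lambda>v. f v - TT f v) \<in> W" using TT_prop[OF f(1)] by auto
    thus "f \<in> W" using f(2) by simp
  qed
next
  show "W \<subseteq> kerop m TT"
  proof
    fix f assume fW: "f \<in> W"
    hence f: "f \<in> tspace m" using Wt by blast
    have "TT f = (\<lambda>_. 0)" using TT_eq[OF f closed_zero[OF PP_closed]] fW by simp
    thus "f \<in> kerop m TT" using f by (simp add: kerop_def)
  qed
qed

end

theorem red_exists:
  fixes W :: "('a::{finite,linorder} list \<Rightarrow> 'k::field) set"
  assumes "subsp m W"
  shows "\<exists>T. is_red_op m T \<and> kerop m T = W"
  using TT_red[OF assms] TT_ker[OF assms] by blast

theorem theta_inv_prop:
  fixes W :: "('a::{finite,linorder} list \<Rightarrow> 'k::field) set"
  assumes "subsp m W"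
  shows "is_red_op m (theta_inv m W) \<and> kerop m (theta_inv m W) = W"
  unfolding theta_inv_def by (rule someI_ex[OF red_exists[OF assms]])




section \<open>Iterated sums, meets and joins\<close>

fun lsum :: "('a list \<Rightarrow> 'k::field) set list \<Rightarrow> ('a list \<Rightarrow> 'k) set" where
  "lsum [] = {(\<lambda>_. 0)}"
| "lsum [W] = W"
| "lsum (W # Ws) = subsp_sum W (lsum Ws)"

lemma subsp_sum_subsp:
  assumes A: "subsp m A" and B: "subsp m B"
  shows "subsp m (subsp_sum A B)"
proof -
  have Ac: "closed A" and Bc: "closed B" and At: "A \<subseteq> tspace m" and Bt: "B \<subseteq> tspace m"
    using A B by (auto simp: subsp_def)
  have "closed (subsp_sum A B)"
    unfolding closed_def
  proof (intro conjI ballI allI)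
    show "(\<lambda>_. 0) \<in> subsp_sum A B" unfolding subsp_sum_def
      using closed_zero[OF Ac] closed_zero[OF Bc] by force
  next
    fix f g assume "f \<in> subsp_sum A B" "g \<in> subsp_sum A B"
    then obtain a1 b1 a2 b2 where ab: "f = (\<lambda>v. a1 v + b1 v)" "a1 \<in> A" "b1 \<in> B"
      "g = (\<lambda>v. a2 v + b2 v)" "a2 \<in> A" "b2 \<in> B" unfolding subsp_sum_def by blast
    have "(\<lambda>v. f v + g v) = (\<lambda>v. (\<lambda>v. a1 v + a2 v) v + (\<lambda>v. b1 v + b2 v) v)"
      using ab by (auto simp: algebra_simps)
    moreover have "(\<lambda>v. a1 v + a2 v) \<in> A" "(\<lambda>v. b1 v + b2 v) \<in> B"
      using closed_add[OF Ac ab(2) ab(5)] closed_add[OF Bc ab(3) ab(6)] by auto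
    ultimately show "(\<lambda>v. f v + g v) \<in> subsp_sum A B" unfolding subsp_sum_def
      by (intro CollectI exI[of _ "\<lambda>v. a1 v + a2 v"] exI[of _ "\<lambda>v. b1 v + b2 v"]) auto
  next
    fix c f assume "f \<in> subsp_sum A B"
    then obtain a1 b1 where ab: "f = (\<lambda>v. a1 v + b1 v)" "a1 \<in> A" "b1 \<in> B"
      unfolding subsp_sum_def by blast
    have "(\<lambda>v. c * f v) = (\<lambda>v. (\<lambda>v. c * a1 v) v + (\<lambda>v. c * b1 v) v)"
      using ab by (auto simp: algebra_simps)
    moreover have "(\<lambda>v. c * a1 v) \<in> A" "(\<lambda>v. c * b1 v) \<in> B"
      using closed_smult[OF Ac ab(2)] closed_smult[OF Bc ab(3)] by auto
    ultimately show "(\<lambda>v. c * f v) \<in> subsp_sum A B" unfolding subsp_sum_def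
      by (intro CollectI exI[of _ "\<lambda>v. c * a1 v"] exI[of _ "\<lambda>v. c * b1 v"]) auto
  qed
  moreover have "subsp_sum A B \<subseteq> tspace m"
  proof
    fix f assume "f \<in> subsp_sum A B"
    then obtain a b where ab: "f = (\<lambda>v. a v + b v)" "a \<in> A" "b \<in> B" unfolding subsp_sum_def by blast
    have "a \<in> tspace m" "b \<in> tspace m" using ab At Bt by auto
    thus "f \<in> tspace m" using ab(1) by (simp add: tspace_def)
  qed
  ultimately show ?thesis by (simp add: subsp_def)
qed

lemma subsp_Int: "subsp m A \<Longrightarrow> subsp m B \<Longrightarrow> subsp m (A \<inter> B)"
  unfolding subsp_def closed_def by auto

lemma lsum_subsp: "Ws \<noteq> [] \<Longrightarrow> (\<forall>W\<in>set Ws. subsp m W) \<Longrightarrow> subsp m (lsum Ws)"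
  by (induction Ws rule: lsum.induct) (auto intro: subsp_sum_subsp)

lemma big_meet_prop:
  fixes Ts :: "((('a::{finite,linorder} list \<Rightarrow> 'k::field) \<Rightarrow> 'a list \<Rightarrow> 'k)) list"
  shows "Ts \<noteq> [] \<Longrightarrow> (\<forall>T\<in>set Ts. is_red_op m T) \<Longrightarrow>
    is_red_op m (big_meet m Ts) \<and> kerop m (big_meet m Ts) = lsum (map (kerop m) Ts)"
proof (induction m Ts rule: big_meet.induct)
  case (3 m T v va)
  let ?R = "big_meet m (v # va)"
  have IH: "is_red_op m ?R" "kerop m ?R = lsum (map (kerop m) (v # va))" using 3 by auto
  have "subsp m (subsp_sum (kerop m T) (kerop m ?R))"
    using red_ker_closed[OF IH(1)] red_ker_closed 3(3) by (intro subsp_sum_subsp) auto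
  from theta_inv_prop[OF this] show ?case using IH by (simp add: red_meet_def)
qed auto

lemma big_join_prop:
  fixes Ts :: "((('a::{finite,linorder} list \<Rightarrow> 'k::field) \<Rightarrow> 'a list \<Rightarrow> 'k)) list"
  shows "Ts \<noteq> [] \<Longrightarrow> (\<forall>T\<in>set Ts. is_red_op m T) \<Longrightarrow>
    is_red_op m (big_join m Ts) \<and> kerop m (big_join m Ts) = \<Inter> (kerop m ` set Ts)"
proof (induction m Ts rule: big_join.induct)
  case (3 m T v va)
  let ?R = "big_join m (v # va)"
  have IH: "is_red_op m ?R" "kerop m ?R = \<Inter> (kerop m ` set (v # va))" using 3 by auto
  have "subsp m (kerop m T \<inter> kerop m ?R)"
    using red_ker_closed[OF IH(1)] red_ker_closed 3(3) by (intro subsp_Int) auto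
  from theta_inv_prop[OF this] show ?case using IH by (simp add: red_join_def)
qed auto

lemma lin_span_lsum:
  "Ws \<noteq> [] \<Longrightarrow> (\<forall>W\<in>set Ws. subsp m W) \<Longrightarrow> lin_span (\<Union> (set Ws)) = lsum Ws"
proof (induction Ws rule: lsum.induct)
  case (2 W) thus ?case by (simp add: lin_span_closed_eq subsp_def)
next
  case (3 W v va)
  let ?L = "lsum (v # va)"
  have IH: "lin_span (\<Union> (set (v # va))) = ?L" using 3 by auto
  have Ls: "subsp m ?L" using 3(3) by (intro lsum_subsp) auto
  have Ws: "subsp m W" using 3(3) by auto
  have S: "subsp m (subsp_sum W ?L)" by (rule subsp_sum_subsp[OF Ws Ls])
  have "lin_span (\<Union> (set (W # v # va))) = lin_span (W \<union> \<Union> (set (v # va)))" by simp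
  also have "\<dots> = subsp_sum W ?L"
  proof
    show "lin_span (W \<union> \<Union> (set (v # va))) \<subseteq> subsp_sum W ?L"
    proof (rule lin_span_min)
      show "closed (subsp_sum W ?L)" using S by (simp add: subsp_def)
      show "W \<union> \<Union> (set (v # va)) \<subseteq> subsp_sum W ?L"
      proof
        fix f assume "f \<in> W \<union> \<Union> (set (v # va))"
        thus "f \<in> subsp_sum W ?L"
        proof
          assume "f \<in> W"
          moreover have "(\<lambda>_. 0) \<in> ?L" using Ls by (simp add: subsp_def closed_zero)
          ultimately show ?thesis unfolding subsp_sum_def by (intro CollectI exI[of _ f] exI[of _ "\<lambda>_. 0"]) auto
        next
          assume "f \<in> \<Union> (set (v # va))"
          hence "f \<in> ?L" using IH lin_span_sub by blast
          moreover have "(\<lambda>_. 0) \<in> W" using Ws by (simp add: subsp_def closed_zero)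
          ultimately show ?thesis unfolding subsp_sum_def by (intro CollectI exI[of _ "\<lambda>_. 0"] exI[of _ f]) auto
        qed
      qed
    qed
  next
    show "subsp_sum W ?L \<subseteq> lin_span (W \<union> \<Union> (set (v # va)))"
    proof
      fix f assume "f \<in> subsp_sum W ?L"
      then obtain a b where ab: "f = (\<lambda>v. a v + b v)" "a \<in> W" "b \<in> ?L" unfolding subsp_sum_def by blast
      have "a \<in> lin_span (W \<union> \<Union> (set (v # va)))" using ab(2) lin_span_sub by blast
      moreover have "b \<in> lin_span (W \<union> \<Union> (set (v # va)))"
        using ab(3) IH lin_span_mono[of "\<Union> (set (v # va))" "W \<union> \<Union> (set (v # va))"] by auto
      ultimately show "f \<in> lin_span (W \<union> \<Union> (set (v # va)))"
        using closed_add[OF lin_span_closed] ab(1) by blast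
    qed
  qed
  finally show ?case by simp
qed auto




definition rsl :: "nat \<Rightarrow> 'a list \<Rightarrow> ('a list \<Rightarrow> 'k::field) \<Rightarrow> 'a list \<Rightarrow> 'k" where
  "rsl a v f = (\<lambda>x. if length x = a then f (x @ v) else 0)"
definition lsl :: "nat \<Rightarrow> 'a list \<Rightarrow> ('a list \<Rightarrow> 'k::field) \<Rightarrow> 'a list \<Rightarrow> 'k" where
  "lsl b u f = (\<lambda>x. if length x = b then f (u @ x) else 0)"

definition RS :: "nat \<Rightarrow> nat \<Rightarrow> ('a list \<Rightarrow> 'k::field) set \<Rightarrow> ('a list \<Rightarrow> 'k) set" where
  "RS a b W = {f \<in> tspace (a + b). \<forall>v. length v = b \<longrightarrow> rsl a v f \<in> W}"
definition LS :: "nat \<Rightarrow> nat \<Rightarrow> ('a list \<Rightarrow> 'k::field) set \<Rightarrow> ('a list \<Rightarrow> 'k) set" where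
  "LS a b W = {f \<in> tspace (a + b). \<forall>u. length u = a \<longrightarrow> lsl b u f \<in> W}"
definition ms :: "nat \<Rightarrow> nat \<Rightarrow> nat \<Rightarrow> ('a list \<Rightarrow> 'k::field) set \<Rightarrow> ('a list \<Rightarrow> 'k) set" where
  "ms m i N X = {f \<in> tspace m. \<forall>u z. length u = i \<longrightarrow> length z = m - i - N \<longrightarrow>
        (\<lambda>x. if length x = N then f (u @ x @ z) else 0) \<in> X}"

lemma rsl_add: "rsl a v (\<lambda>w. f w + g w) = (\<lambda>x. rsl a v f x + rsl a v g x)"
  by (rule ext) (simp add: rsl_def)
lemma rsl_smult: "rsl a v (\<lambda>w. c * f w) = (\<lambda>x. c * rsl a v f x)"
  by (rule ext) (simp add: rsl_def)
lemma rsl_zero: "rsl a v (\<lambda>w. 0) = (\<lambda>x. 0)"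
  by (rule ext) (simp add: rsl_def)
lemma lsl_add: "lsl a v (\<lambda>w. f w + g w) = (\<lambda>x. lsl a v f x + lsl a v g x)"
  by (rule ext) (simp add: lsl_def)
lemma lsl_smult: "lsl a v (\<lambda>w. c * f w) = (\<lambda>x. c * lsl a v f x)"
  by (rule ext) (simp add: lsl_def)
lemma lsl_zero: "lsl a v (\<lambda>w. 0) = (\<lambda>x. 0)"
  by (rule ext) (simp add: lsl_def)

lemma RS_subsp: "closed W \<Longrightarrow> subsp (a + b) (RS a b W)"
  unfolding subsp_def closed_def RS_def
  using closed_tspace[of "a+b"]
  by (auto simp: closed_def rsl_add rsl_smult rsl_zero)

lemma LS_subsp: "closed W \<Longrightarrow> subsp (a + b) (LS a b W)"
  unfolding subsp_def closed_def LS_def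
  using closed_tspace[of "a+b"]
  by (auto simp: closed_def lsl_add lsl_smult lsl_zero)

lemma tens_tspace: "f \<in> tspace a \<Longrightarrow> g \<in> tspace b \<Longrightarrow> tens a f g \<in> tspace (a + b)"
  unfolding tspace_def tens_def
proof (intro CollectI allI impI)
  fix w :: "'a list" assume f: "f \<in> {f. \<forall>w. length w \<noteq> a \<longrightarrow> f w = 0}"
    and g: "g \<in> {f. \<forall>w. length w \<noteq> b \<longrightarrow> f w = 0}" and w: "length w \<noteq> a + b"
  show "f (take a w) * g (drop a w) = 0"
  proof (cases "length w < a")
    case True thus ?thesis using f by simp
  next
    case False thus ?thesis using g w by simp
  qed
qed

lemma tensp_RS:
  fixes W :: "('a::finite list \<Rightarrow> 'k::field) set"
  assumes W: "subsp a W"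
  shows "tensp a W (tspace b) = RS a b W"
proof
  have Wc: "closed W" and Wt: "W \<subseteq> tspace a" using W by (auto simp: subsp_def)
  show "tensp a W (tspace b) \<subseteq> RS a b W"
    unfolding tensp_def
  proof (rule lin_span_min)
    show "closed (RS a b W)" using RS_subsp[OF Wc] by (simp add: subsp_def)
    show "{tens a f g |f g. f \<in> W \<and> g \<in> tspace b} \<subseteq> RS a b W"
    proof
      fix F assume "F \<in> {tens a f g |f g. f \<in> W \<and> g \<in> tspace b}"
      then obtain f g where fg: "F = tens a f g" "f \<in> W" "g \<in> tspace b" by blast
      have ft: "f \<in> tspace a" using fg Wt by blast
      have rslF: "rsl a v F = (\<lambda>x. g v * f x)" if "length v = b" for v
      proof
        fix x show "rsl a v F x = g v * f x"
        proof (cases "length x = a")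
          case True thus ?thesis using fg(1) that by (simp add: rsl_def tens_def)
        next
          case False
          hence "f x = 0" using ft by (simp add: tspace_def)
          thus ?thesis using False by (simp add: rsl_def)
        qed
      qed
      have "\<forall>v. length v = b \<longrightarrow> rsl a v F \<in> W"
      proof (intro allI impI)
        fix v :: "'a list" assume "length v = b"
        thus "rsl a v F \<in> W" using rslF closed_smult[OF Wc fg(2), of "g v"] by metis
      qed
      thus "F \<in> RS a b W" unfolding RS_def using tens_tspace[OF ft fg(3)] fg(1) by simp
    qed
  qed
next
  show "RS a b W \<subseteq> tensp a W (tspace b)"
  proof
    fix f assume f: "f \<in> RS a b W"
    have ft: "f \<in> tspace (a + b)" and fs: "\<And>v. length v = b \<Longrightarrow> rsl a v f \<in> W" using f by (auto simp: RS_def)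
    have eq: "f = (\<lambda>w. \<Sum>v\<in>{v. length v = b}. tens a (rsl a v f) (wd v) w)"
    proof
      fix w :: "'a list"
      have "(\<Sum>v\<in>{v. length v = b}. tens a (rsl a v f) (wd v) w)
          = (\<Sum>v\<in>{v. length v = b}. if drop a w = v then rsl a (drop a w) f (take a w) else 0)"
        by (intro sum.cong refl) (simp add: tens_def wd_def)
      also have "\<dots> = (if length (drop a w) = b then rsl a (drop a w) f (take a w) else 0)"
        by (simp add: finite_words)
      also have "\<dots> = f w"
      proof (cases "length w = a + b")
        case True thus ?thesis by (simp add: rsl_def)
      next
        case False
        hence "f w = 0" using ft by (simp add: tspace_def)
        moreover have "\<not> (length (drop a w) = b \<and> length (take a w) = a)" using False by auto
        ultimately show ?thesis by (auto simp: rsl_def)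
      qed
      finally show "f w = (\<Sum>v\<in>{v. length v = b}. tens a (rsl a v f) (wd v) w)" by simp
    qed
    have "(\<lambda>w. \<Sum>v\<in>{v. length v = b}. tens a (rsl a v f) (wd v) w) \<in> tensp a W (tspace b)"
      unfolding tensp_def
    proof (rule closed_sum[OF lin_span_closed finite_words], rule ballI)
      fix v :: "'a list" assume "v \<in> {v. length v = b}"
      hence r: "rsl a v f \<in> W" and d: "wd v \<in> tspace b" using fs wd_tspace by auto
      have "tens a (rsl a v f) (wd v) \<in> {tens a f g |f g. f \<in> W \<and> g \<in> tspace b}"
        unfolding mem_Collect_eq by (rule exI, rule exI, rule conjI[OF refl conjI[OF r d]])
      thus "tens a (rsl a v f) (wd v) \<in> lin_span {tens a f g |f g. f \<in> W \<and> g \<in> tspace b}"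
        by (rule subsetD[OF lin_span_sub])
    qed
    thus "f \<in> tensp a W (tspace b)" by (subst eq)
  qed
qed

lemma tensp_LS:
  fixes W :: "('a::finite list \<Rightarrow> 'k::field) set"
  assumes W: "subsp b W"
  shows "tensp a (tspace a) W = LS a b W"
proof
  have Wc: "closed W" and Wt: "W \<subseteq> tspace b" using W by (auto simp: subsp_def)
  show "tensp a (tspace a) W \<subseteq> LS a b W"
    unfolding tensp_def
  proof (rule lin_span_min)
    show "closed (LS a b W)" using LS_subsp[OF Wc] by (simp add: subsp_def)
    show "{tens a f g |f g. f \<in> tspace a \<and> g \<in> W} \<subseteq> LS a b W"
    proof
      fix F assume "F \<in> {tens a f g |f g. f \<in> tspace a \<and> g \<in> W}"
      then obtain f g where fg: "F = tens a f g" "f \<in> tspace a" "g \<in> W" by blast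
      have gt: "g \<in> tspace b" using fg Wt by blast
      have lslF: "lsl b u F = (\<lambda>x. f u * g x)" if "length u = a" for u
      proof
        fix x show "lsl b u F x = f u * g x"
        proof (cases "length x = b")
          case True thus ?thesis using fg(1) that by (simp add: lsl_def tens_def)
        next
          case False
          hence "g x = 0" using gt by (simp add: tspace_def)
          thus ?thesis using False by (simp add: lsl_def)
        qed
      qed
      have "\<forall>u. length u = a \<longrightarrow> lsl b u F \<in> W"
      proof (intro allI impI)
        fix u :: "'a list" assume "length u = a"
        thus "lsl b u F \<in> W" using lslF closed_smult[OF Wc fg(3), of "f u"] by metis
      qed
      thus "F \<in> LS a b W" unfolding LS_def using tens_tspace[OF fg(2) gt] fg(1) by simp
    qed
  qed
next
  show "LS a b W \<subseteq> tensp a (tspace a) W"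
  proof
    fix f assume f: "f \<in> LS a b W"
    have ft: "f \<in> tspace (a + b)" and fs: "\<And>u. length u = a \<Longrightarrow> lsl b u f \<in> W" using f by (auto simp: LS_def)
    have eq: "f = (\<lambda>w. \<Sum>u\<in>{u. length u = a}. tens a (wd u) (lsl b u f) w)"
    proof
      fix w :: "'a list"
      have "(\<Sum>u\<in>{u. length u = a}. tens a (wd u) (lsl b u f) w)
          = (\<Sum>u\<in>{u. length u = a}. if take a w = u then lsl b (take a w) f (drop a w) else 0)"
        by (intro sum.cong refl) (simp add: tens_def wd_def)
      also have "\<dots> = (if length (take a w) = a then lsl b (take a w) f (drop a w) else 0)"
        by (simp add: finite_words)
      also have "\<dots> = f w"
      proof (cases "length w = a + b")
        case True thus ?thesis by (simp add: lsl_def)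
      next
        case False
        hence "f w = 0" using ft by (simp add: tspace_def)
        moreover have "\<not> (length (drop a w) = b \<and> length (take a w) = a)" using False by auto
        ultimately show ?thesis by (auto simp: lsl_def)
      qed
      finally show "f w = (\<Sum>u\<in>{u. length u = a}. tens a (wd u) (lsl b u f) w)" by simp
    qed
    have "(\<lambda>w. \<Sum>u\<in>{u. length u = a}. tens a (wd u) (lsl b u f) w) \<in> tensp a (tspace a) W"
      unfolding tensp_def
    proof (rule closed_sum[OF lin_span_closed finite_words], rule ballI)
      fix u :: "'a list" assume "u \<in> {u. length u = a}"
      hence r: "lsl b u f \<in> W" and d: "wd u \<in> tspace a" using fs wd_tspace by auto
      have "tens a (wd u) (lsl b u f) \<in> {tens a f g |f g. f \<in> tspace a \<and> g \<in> W}"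
        unfolding mem_Collect_eq by (rule exI, rule exI, rule conjI[OF refl conjI[OF d r]])
      thus "tens a (wd u) (lsl b u f) \<in> lin_span {tens a f g |f g. f \<in> tspace a \<and> g \<in> W}"
        by (rule subsetD[OF lin_span_sub])
    qed
    thus "f \<in> tensp a (tspace a) W" by (subst eq)
  qed
qed




lemma rsl_lsl: "length z = k \<Longrightarrow>
   rsl N z (lsl (N + k) u f) = (\<lambda>x. if length x = N then f (u @ x @ z) else 0)"
  by (rule ext) (simp add: rsl_def lsl_def)

lemma lsl_tspace: "lsl b u f \<in> tspace b" by (simp add: lsl_def tspace_def)
lemma rsl_tspace: "rsl a v f \<in> tspace a" by (simp add: rsl_def tspace_def)

lemma LS_RS_ms:
  assumes im: "i + N \<le> m"
  shows "LS i (N + (m - N - i)) (RS N (m - N - i) X) = ms m i N X"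
proof -
  define k where "k = m - N - i"
  have e1: "i + (N + k) = m" and e2: "m - i - N = k" using im unfolding k_def by auto
  have "f \<in> LS i (N + k) (RS N k X) \<longleftrightarrow> f \<in> ms m i N X" for f
  proof -
    have "f \<in> LS i (N + k) (RS N k X) \<longleftrightarrow> f \<in> tspace m \<and>
      (\<forall>u. length u = i \<longrightarrow> (\<forall>z. length z = k \<longrightarrow> rsl N z (lsl (N + k) u f) \<in> X))"
      unfolding LS_def RS_def e1 using lsl_tspace by auto
    also have "\<dots> \<longleftrightarrow> f \<in> ms m i N X"
      unfolding ms_def e2 by (simp add: rsl_lsl)
    finally show ?thesis .
  qed
  thus ?thesis unfolding k_def by blast
qed

lemma ms_K:
  fixes X :: "('a::finite list \<Rightarrow> 'k::field) set"
  assumes X: "subsp N X" and im: "i + N \<le> m"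
  shows "tensp i (tspace i) (tensp N X (tspace (m - N - i))) = ms m i N X"
proof -
  have "tensp N X (tspace (m - N - i)) = RS N (m - N - i) X" by (rule tensp_RS[OF X])
  moreover have "subsp (N + (m - N - i)) (RS N (m - N - i) X)"
    using X by (intro RS_subsp) (simp add: subsp_def)
  ultimately have "tensp i (tspace i) (tensp N X (tspace (m - N - i))) = LS i (N + (m - N - i)) (RS N (m - N - i) X)"
    using tensp_LS by metis
  also have "\<dots> = ms m i N X" by (rule LS_RS_ms[OF im])
  finally show ?thesis .
qed

lemma ms_subsp: assumes X: "closed X" shows "subsp m (ms m i N X)"
  unfolding subsp_def closed_def
proof (intro conjI ballI allI)
  show "(\<lambda>_. 0) \<in> ms m i N X"
    using closed_zero[OF X] by (simp add: ms_def tspace_def)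
next
  fix f g assume f: "f \<in> ms m i N X" and g: "g \<in> ms m i N X"
  have "f \<in> tspace m" "g \<in> tspace m" using f g by (simp_all add: ms_def)
  hence "(\<lambda>v. f v + g v) \<in> tspace m" by (rule closed_add[OF closed_tspace])
  moreover have "(\<lambda>x. if length x = N then f (u @ x @ z) + g (u @ x @ z) else 0) \<in> X"
    if "length u = i" "length z = m - i - N" for u z
  proof -
    have a: "(\<lambda>x. if length x = N then f (u @ x @ z) else 0) \<in> X"
      "(\<lambda>x. if length x = N then g (u @ x @ z) else 0) \<in> X" using f g that by (simp_all add: ms_def)
    have "(\<lambda>v. (\<lambda>x. if length x = N then f (u @ x @ z) else 0) v + (\<lambda>x. if length x = N then g (u @ x @ z) else 0) v) \<in> X"
      by (rule closed_add[OF X a])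
    moreover have "(\<lambda>v. (\<lambda>x. if length x = N then f (u @ x @ z) else 0) v + (\<lambda>x. if length x = N then g (u @ x @ z) else 0) v)
       = (\<lambda>x. if length x = N then f (u @ x @ z) + g (u @ x @ z) else 0)" by (rule ext) simp
    ultimately show ?thesis by simp
  qed
  ultimately show "(\<lambda>v. f v + g v) \<in> ms m i N X" by (simp add: ms_def)
next
  fix c f assume f: "f \<in> ms m i N X"
  have "f \<in> tspace m" using f by (simp add: ms_def)
  hence "(\<lambda>v. c * f v) \<in> tspace m" by (rule closed_smult[OF closed_tspace])
  moreover have "(\<lambda>x. if length x = N then c * f (u @ x @ z) else 0) \<in> X"
    if "length u = i" "length z = m - i - N" for u z
  proof -
    have a: "(\<lambda>x. if length x = N then f (u @ x @ z) else 0) \<in> X" using f that by (simp add: ms_def)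
    have "(\<lambda>v. c * (\<lambda>x. if length x = N then f (u @ x @ z) else 0) v) \<in> X"
      by (rule closed_smult[OF X a])
    moreover have "(\<lambda>v. c * (\<lambda>x. if length x = N then f (u @ x @ z) else 0) v)
       = (\<lambda>x. if length x = N then c * f (u @ x @ z) else 0)" by (rule ext) simp
    ultimately show ?thesis by simp
  qed
  ultimately show "(\<lambda>v. c * f v) \<in> ms m i N X" by (simp add: ms_def)
next
  show "ms m i N X \<subseteq> tspace m" by (auto simp: ms_def)
qed

lemma RS_ms:
  assumes "i + N \<le> j"
  shows "RS j l (ms j i N X) = ms (j + l) i N X"
proof
  show "RS j l (ms j i N X) \<subseteq> ms (j + l) i N X"
  proof
    fix f assume f: "f \<in> RS j l (ms j i N X)"
    have ft: "f \<in> tspace (j + l)" using f by (simp add: RS_def)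
    have "(\<lambda>x. if length x = N then f (u @ x @ z') else 0) \<in> X"
      if u: "length u = i" and z': "length z' = j + l - i - N" for u z'
    proof -
      define z where "z = take (j - i - N) z'"
      define v where "v = drop (j - i - N) z'"
      have zv: "z' = z @ v" "length z = j - i - N" "length v = l"
        using z' assms unfolding z_def v_def by auto
      have "rsl j v f \<in> ms j i N X" using f zv(3) by (simp add: RS_def)
      hence "(\<lambda>x. if length x = N then rsl j v f (u @ x @ z) else 0) \<in> X"
        using u zv(2) by (simp add: ms_def)
      moreover have "(\<lambda>x. if length x = N then rsl j v f (u @ x @ z) else 0)
          = (\<lambda>x. if length x = N then f (u @ x @ z') else 0)"
        using u zv assms by (intro ext) (simp add: rsl_def)
      ultimately show ?thesis by simp
    qed
    thus "f \<in> ms (j + l) i N X" using ft by (simp add: ms_def)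
  qed
next
  show "ms (j + l) i N X \<subseteq> RS j l (ms j i N X)"
  proof
    fix f assume f: "f \<in> ms (j + l) i N X"
    have ft: "f \<in> tspace (j + l)" using f by (simp add: ms_def)
    have "rsl j v f \<in> ms j i N X" if v: "length v = l" for v
    proof -
      have "(\<lambda>x. if length x = N then rsl j v f (u @ x @ z) else 0) \<in> X"
        if u: "length u = i" and z: "length z = j - i - N" for u z
      proof -
        have "length (z @ v) = j + l - i - N" using z v assms by simp
        hence "(\<lambda>x. if length x = N then f (u @ x @ (z @ v)) else 0) \<in> X"
          using f u by (simp add: ms_def)
        moreover have "(\<lambda>x. if length x = N then rsl j v f (u @ x @ z) else 0)
          = (\<lambda>x. if length x = N then f (u @ x @ (z @ v)) else 0)"
          using u z assms by (intro ext) (simp add: rsl_def)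
        ultimately show ?thesis by simp
      qed
      thus ?thesis using rsl_tspace by (simp add: ms_def)
    qed
    thus "f \<in> RS j l (ms j i N X)" using ft by (simp add: RS_def)
  qed
qed

lemma LS_ms:
  assumes "i + N \<le> l"
  shows "LS a l (ms l i N X) = ms (a + l) (a + i) N X"
proof
  show "LS a l (ms l i N X) \<subseteq> ms (a + l) (a + i) N X"
  proof
    fix f assume f: "f \<in> LS a l (ms l i N X)"
    have ft: "f \<in> tspace (a + l)" using f by (simp add: LS_def)
    have "(\<lambda>x. if length x = N then f (u' @ x @ z) else 0) \<in> X"
      if u': "length u' = a + i" and z: "length z = a + l - (a + i) - N" for u' z
    proof -
      define u where "u = take a u'"
      define w where "w = drop a u'"
      have uw: "u' = u @ w" "length u = a" "length w = i"
        using u' unfolding u_def w_def by auto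
      have "lsl l u f \<in> ms l i N X" using f uw(2) by (simp add: LS_def)
      hence "(\<lambda>x. if length x = N then lsl l u f (w @ x @ z) else 0) \<in> X"
        using uw(3) z by (simp add: ms_def)
      moreover have "(\<lambda>x. if length x = N then lsl l u f (w @ x @ z) else 0)
          = (\<lambda>x. if length x = N then f (u' @ x @ z) else 0)"
        using uw z assms by (intro ext) (simp add: lsl_def)
      ultimately show ?thesis by simp
    qed
    thus "f \<in> ms (a + l) (a + i) N X" using ft by (simp add: ms_def)
  qed
next
  show "ms (a + l) (a + i) N X \<subseteq> LS a l (ms l i N X)"
  proof
    fix f assume f: "f \<in> ms (a + l) (a + i) N X"
    have ft: "f \<in> tspace (a + l)" using f by (simp add: ms_def)
    have "lsl l u f \<in> ms l i N X" if u: "length u = a" for u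
    proof -
      have "(\<lambda>x. if length x = N then lsl l u f (w @ x @ z) else 0) \<in> X"
        if w: "length w = i" and z: "length z = l - i - N" for w z
      proof -
        have "length (u @ w) = a + i" "length z = a + l - (a + i) - N" using u w z by auto
        hence "(\<lambda>x. if length x = N then f ((u @ w) @ x @ z) else 0) \<in> X"
          using f by (simp add: ms_def)
        moreover have "(\<lambda>x. if length x = N then lsl l u f (w @ x @ z) else 0)
          = (\<lambda>x. if length x = N then f ((u @ w) @ x @ z) else 0)"
          using w z assms by (intro ext) (simp add: lsl_def)
        ultimately show ?thesis by simp
      qed
      thus ?thesis using lsl_tspace by (simp add: ms_def)
    qed
    thus "f \<in> LS a l (ms l i N X)" using ft by (simp add: LS_def)
  qed
qed

lemma LS_Inter: "I \<noteq> {} \<Longrightarrow> LS a l (\<Inter> (F ` I)) = \<Inter> ((\<lambda>i. LS a l (F i)) ` I)"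
  unfolding LS_def by auto

lemma RS_sum:
  assumes W1: "subsp a W1" and W2: "subsp a W2"
  shows "RS a b (subsp_sum W1 W2) = subsp_sum (RS a b W1) (RS a b W2)"
proof
  have c1: "closed W1" and t1: "W1 \<subseteq> tspace a" and c2: "closed W2" and t2: "W2 \<subseteq> tspace a"
    using W1 W2 by (auto simp: subsp_def)
  show "subsp_sum (RS a b W1) (RS a b W2) \<subseteq> RS a b (subsp_sum W1 W2)"
  proof
    fix f assume "f \<in> subsp_sum (RS a b W1) (RS a b W2)"
    then obtain g h where gh: "f = (\<lambda>v. g v + h v)" "g \<in> RS a b W1" "h \<in> RS a b W2"
      unfolding subsp_sum_def by blast
    have "f \<in> tspace (a + b)" using gh closed_add[OF closed_tspace] by (auto simp: RS_def)
    moreover have "rsl a v f \<in> subsp_sum W1 W2" if "length v = b" for v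
    proof -
      have "rsl a v g \<in> W1" "rsl a v h \<in> W2" using gh that by (auto simp: RS_def)
      moreover have "rsl a v f = (\<lambda>x. rsl a v g x + rsl a v h x)" using gh(1) rsl_add by simp
      ultimately show ?thesis unfolding subsp_sum_def
        by (intro CollectI exI[of _ "rsl a v g"] exI[of _ "rsl a v h"]) simp
    qed
    ultimately show "f \<in> RS a b (subsp_sum W1 W2)" by (simp add: RS_def)
  qed
next
  show "RS a b (subsp_sum W1 W2) \<subseteq> subsp_sum (RS a b W1) (RS a b W2)"
  proof
    fix f assume f: "f \<in> RS a b (subsp_sum W1 W2)"
    have ft: "f \<in> tspace (a + b)" and fs: "\<And>v. length v = b \<Longrightarrow> rsl a v f \<in> subsp_sum W1 W2"
      using f by (auto simp: RS_def)
    define P where "P v = (SOME p. p \<in> W1 \<and> (\<lambda>x. rsl a v f x - p x) \<in> W2)" for v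
    have P: "P v \<in> W1 \<and> (\<lambda>x. rsl a v f x - P v x) \<in> W2" if lv: "length v = b" for v
    proof -
      obtain p q where pq: "rsl a v f = (\<lambda>x. p x + q x)" "p \<in> W1" "q \<in> W2"
        using fs[OF lv] unfolding subsp_sum_def by blast
      have "(\<lambda>x. rsl a v f x - p x) = q" using pq(1) by (intro ext) simp
      hence "\<exists>p. p \<in> W1 \<and> (\<lambda>x. rsl a v f x - p x) \<in> W2" using pq by metis
      thus ?thesis unfolding P_def by (rule someI_ex)
    qed
    define g where "g w = (if length w = a + b then P (drop a w) (take a w) else 0)" for w
    define h where "h w = f w - g w" for w
    have gt: "g \<in> tspace (a + b)" by (simp add: g_def tspace_def)
    have ht: "h \<in> tspace (a + b)" using ft gt by (simp add: h_def tspace_def)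
    have rg: "rsl a v g = P v" if "length v = b" for v
    proof
      fix x show "rsl a v g x = P v x"
      proof (cases "length x = a")
        case True thus ?thesis using that by (simp add: rsl_def g_def)
      next
        case False
        have "P v \<in> tspace a" using P[OF that] W1 by (auto simp: subsp_def)
        hence "P v x = 0" using False by (simp add: tspace_def)
        thus ?thesis using False by (simp add: rsl_def)
      qed
    qed
    have rh: "rsl a v h = (\<lambda>x. rsl a v f x - P v x)" if "length v = b" for v
    proof
      fix x show "rsl a v h x = rsl a v f x - P v x"
        using fun_cong[OF rg[OF that], of x] by (simp add: rsl_def h_def split: if_splits)
    qed
    have "g \<in> RS a b W1" using gt rg P by (simp add: RS_def)
    moreover have "h \<in> RS a b W2" using ht rh P by (simp add: RS_def)
    moreover have "f = (\<lambda>v. g v + h v)" by (simp add: h_def)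
    ultimately show "f \<in> subsp_sum (RS a b W1) (RS a b W2)" unfolding subsp_sum_def
      by (intro CollectI exI[of _ g] exI[of _ h]) simp
  qed
qed

lemma RS_lsum:
  "Ws \<noteq> [] \<Longrightarrow> (\<forall>W\<in>set Ws. subsp a W) \<Longrightarrow> RS a b (lsum Ws) = lsum (map (RS a b) Ws)"
proof (induction Ws rule: lsum.induct)
  case (3 W v va)
  have "subsp a (lsum (v # va))" using 3(3) by (intro lsum_subsp) auto
  hence "RS a b (lsum (W # v # va)) = subsp_sum (RS a b W) (RS a b (lsum (v # va)))"
    using RS_sum[of a W "lsum (v # va)" b] 3(3) by simp
  thus ?case using 3 by simp
qed auto




lemma lin_ext_add: "lin_ext m img (\<lambda>v. f v + g v) = (\<lambda>v. lin_ext m img f v + lin_ext m img g v)"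
  by (rule ext) (simp add: lin_ext_def distrib_right sum.distrib)
lemma lin_ext_smult: "lin_ext m img (\<lambda>v. c * f v) = (\<lambda>v. c * lin_ext m img f v)"
  by (rule ext) (simp add: lin_ext_def sum_distrib_left mult.assoc)
lemma lin_ext_diff: "lin_ext m img (\<lambda>v. f v - g v) = (\<lambda>v. lin_ext m img f v - lin_ext m img g v)"
  by (rule ext) (simp add: lin_ext_def left_diff_distrib sum_subtractf)
lemma lin_ext_sum: "lin_ext m img (\<lambda>v. \<Sum>b\<in>B. F b v) = (\<lambda>v. \<Sum>b\<in>B. lin_ext m img (F b) v)"
  by (rule ext) (simp add: lin_ext_def sum_distrib_right sum.swap[of _ B])

lemma lex_app:
  fixes y y' :: "'a::linorder list"
  shows "length y = length y' \<Longrightarrow> y < y' \<Longrightarrow> u @ y @ z < u @ y' @ z'"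
proof (induction u)
  case Nil
  show ?case using Nil
  proof (induction y arbitrary: y')
    case Nil thus ?case by simp
  next
    case (Cons a y)
    then obtain b t where y': "y' = b # t" by (cases y') auto
    show ?case using Cons y' by auto
  qed
qed simp

lemma split3:
  assumes "length v = m" "i + N \<le> m"
  shows "v = take i v @ take N (drop i v) @ drop (i + N) v"
    "length (take i v) = i" "length (take N (drop i v)) = N" "length (drop (i + N) v) = m - i - N"
proof -
  have "v = take i v @ drop i v" by simp
  also have "drop i v = take N (drop i v) @ drop N (drop i v)" by (rule append_take_drop_id[symmetric])
  also have "drop N (drop i v) = drop (i + N) v" by (simp add: add.commute)
  finally show "v = take i v @ take N (drop i v) @ drop (i + N) v" .
qed (use assms in auto)

context
  fixes R :: "('a::{finite,linorder} list \<Rightarrow> 'k::field) set" and N :: nat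
  assumes RP: "reduced_hom_pres N R"
begin

lemma R_t: "R \<subseteq> tspace N" using RP by (simp add: reduced_hom_pres_def)

lemma R_lm:
  assumes f: "f \<in> R"
  shows "f (lm f) = 1" "length (lm f) = N" "\<And>v. f v \<noteq> 0 \<Longrightarrow> v \<le> lm f"
proof -
  have ft: "f \<in> tspace N" using f R_t by blast
  have "f \<noteq> (\<lambda>_. 0)" using f RP by (simp add: reduced_hom_pres_def)
  then obtain v0 where v0: "f v0 \<noteq> 0" by auto
  note M = Max_supp[OF ft v0]
  show "f (lm f) = 1" using f RP by (simp add: reduced_hom_pres_def)
  show "length (lm f) = N" using M(1) tspace_len[OF ft] unfolding lm_def by blast
  show "\<And>v. f v \<noteq> 0 \<Longrightarrow> v \<le> lm f" using M(2) unfolding lm_def by blast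
qed

lemma R_inj: "f \<in> R \<Longrightarrow> g \<in> R \<Longrightarrow> lm f = lm g \<Longrightarrow> f = g"
proof (rule ccontr)
  assume a: "f \<in> R" "g \<in> R" "lm f = lm g" "f \<noteq> g"
  hence "\<not> is_factor (lm g) (lm f)" using RP unfolding reduced_hom_pres_def by metis
  moreover have "is_factor (lm g) (lm f)" using a(3) unfolding is_factor_def
    by (intro exI[of _ "[]"]) simp
  ultimately show False by simp
qed

lemma R_nf: "f \<in> R \<Longrightarrow> v \<noteq> lm f \<Longrightarrow> f v \<noteq> 0 \<Longrightarrow> \<not> (\<exists>g\<in>R. lm g = v)"
proof
  assume a: "f \<in> R" "v \<noteq> lm f" "f v \<noteq> 0" and "\<exists>g\<in>R. lm g = v"
  then obtain g where g: "g \<in> R" "lm g = v" by blast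
  have "normal_form R v" using a RP unfolding reduced_hom_pres_def by blast
  hence "\<not> is_factor (lm g) v" using g(1) by (simp add: normal_form_def)
  moreover have "is_factor (lm g) v" using g(2) unfolding is_factor_def
    by (intro exI[of _ "[]"]) simp
  ultimately show False by simp
qed

lemma S_img_lm: "f \<in> R \<Longrightarrow> S_img R (lm f) = (\<lambda>v. wd (lm f) v - f v)"
proof -
  assume f: "f \<in> R"
  have "(THE g. g \<in> R \<and> lm g = lm f) = f"
    using f R_inj by (intro the_equality) auto
  thus ?thesis using f unfolding S_img_def by auto
qed

lemma S_img_nlm: "\<not> (\<exists>f\<in>R. lm f = x) \<Longrightarrow> S_img R x = wd x"
  unfolding S_img_def by simp

lemma S_img_t: "length x = N \<Longrightarrow> S_img R x \<in> tspace N"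
proof (cases "\<exists>f\<in>R. lm f = x")
  case True
  assume x: "length x = N"
  then obtain f where f: "f \<in> R" "lm f = x" using True by blast
  have "f \<in> tspace N" using f R_t by blast
  thus ?thesis using S_img_lm[OF f(1)] f(2) closed_diff[OF closed_tspace wd_tspace[OF x]] by simp
next
  case False
  assume x: "length x = N"
  thus ?thesis using S_img_nlm[OF False] wd_tspace[OF x] by simp
qed

abbreviation "SS \<equiv> S_op N R"

lemma SS_eq: "SS g y = (\<Sum>x\<in>{w. length w = N}. g x * S_img R x y)"
  by (simp add: S_op_def lin_ext_def)

lemma SS_t: "SS g \<in> tspace N"
  unfolding tspace_def
proof (intro CollectI allI impI)
  fix y :: "'a list" assume y: "length y \<noteq> N"
  have "S_img R x y = 0" if "length x = N" for x using S_img_t[OF that] y by (simp add: tspace_def)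
  thus "SS g y = 0" unfolding SS_eq by simp
qed

lemma SS_wd: "length y0 = N \<Longrightarrow> SS (wd y0) = S_img R y0"
proof
  fix y assume y0: "length y0 = N"
  have "SS (wd y0) y = (\<Sum>x\<in>{w. length w = N}. if x = y0 then S_img R y0 y else 0)"
    unfolding SS_eq by (intro sum.cong refl) (simp add: wd_def)
  also have "\<dots> = S_img R y0 y" using y0 by (simp add: finite_words)
  finally show "SS (wd y0) y = S_img R y0 y" .
qed

lemma SS_R: "f \<in> R \<Longrightarrow> SS f = (\<lambda>_. 0)"
proof
  fix y assume f: "f \<in> R"
  have ft: "f \<in> tspace N" using f R_t by blast
  define x0 where "x0 = lm f"
  have x0: "f x0 = 1" "length x0 = N" using R_lm[OF f] unfolding x0_def by auto
  have "SS f y = (\<Sum>x\<in>{w. length w = N}. f x * wd x y - (if x = x0 then f y else 0))"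
    unfolding SS_eq
  proof (intro sum.cong refl)
    fix x :: "'a list" assume "x \<in> {w. length w = N}"
    show "f x * S_img R x y = f x * wd x y - (if x = x0 then f y else 0)"
    proof (cases "x = x0")
      case True thus ?thesis using S_img_lm[OF f] x0 unfolding x0_def by (simp add: right_diff_distrib)
    next
      case False
      show ?thesis
      proof (cases "f x = 0")
        case False
        hence "S_img R x = wd x" using R_nf[OF f] \<open>x \<noteq> x0\<close> S_img_nlm unfolding x0_def by blast
        thus ?thesis using \<open>x \<noteq> x0\<close> by simp
      qed (use \<open>x \<noteq> x0\<close> in simp)
    qed
  qed
  also have "\<dots> = (\<Sum>x\<in>{w. length w = N}. f x * wd x y) - (\<Sum>x\<in>{w. length w = N}. if x = x0 then f y else 0)"
    by (simp add: sum_subtractf)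
  also have "\<dots> = f y - f y" using tspace_expand[OF ft] x0(2) by (simp add: finite_words)
  finally show "SS f y = 0" by simp
qed

lemma SS_X: "g \<in> lin_span R \<Longrightarrow> SS g = (\<lambda>_. 0)"
proof -
  assume "g \<in> lin_span R"
  then obtain B c where b: "finite B" "B \<subseteq> R" "g = (\<lambda>v. \<Sum>b\<in>B. c b * b v)"
    unfolding lin_span_def by blast
  have "SS g = (\<lambda>v. \<Sum>b\<in>B. SS (\<lambda>v. c b * b v) v)"
    unfolding b(3) S_op_def by (rule lin_ext_sum)
  also have "\<dots> = (\<lambda>v. \<Sum>b\<in>B. c b * SS b v)"
    unfolding S_op_def lin_ext_smult by simp
  also have "\<dots> = (\<lambda>_. 0)" using b(2) SS_R by (intro ext sum.neutral) auto
  finally show ?thesis .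
qed

lemma SS_resid: "g \<in> tspace N \<Longrightarrow> (\<lambda>v. g v - SS g v) \<in> lin_span R"
proof -
  assume g: "g \<in> tspace N"
  have "(\<lambda>v. g v - SS g v) = (\<lambda>v. \<Sum>x\<in>{w. length w = N}. (\<lambda>v. g x * (wd x v - S_img R x v)) v)"
  proof
    fix v
    show "g v - SS g v = (\<Sum>x\<in>{w. length w = N}. (\<lambda>v. g x * (wd x v - S_img R x v)) v)"
      unfolding SS_eq using tspace_expand[OF g, of v]
      by (simp add: right_diff_distrib sum_subtractf)
  qed
  also have "\<dots> \<in> lin_span R"
  proof (rule closed_sum[OF lin_span_closed finite_words], rule ballI)
    fix x :: "'a list" assume "x \<in> {w. length w = N}"
    show "(\<lambda>v. g x * (wd x v - S_img R x v)) \<in> lin_span R"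
    proof (cases "\<exists>f\<in>R. lm f = x")
      case True
      then obtain f where f: "f \<in> R" "lm f = x" by blast
      have "(\<lambda>v. g x * (wd x v - S_img R x v)) = (\<lambda>v. g x * f v)"
        using S_img_lm[OF f(1)] f(2) by auto
      moreover have "(\<lambda>v. g x * f v) \<in> lin_span R"
        by (rule closed_smult[OF lin_span_closed]) (use f lin_span_sub in blast)
      ultimately show ?thesis by simp
    next
      case False
      thus ?thesis using S_img_nlm[OF False] closed_zero[OF lin_span_closed] by simp
    qed
  qed
  finally show ?thesis .
qed

lemma SS_ker: "g \<in> tspace N \<Longrightarrow> SS g = (\<lambda>_. 0) \<longleftrightarrow> g \<in> lin_span R"
  using SS_resid[of g] SS_X[of g] by auto

lemma SS_idem: "g \<in> tspace N \<Longrightarrow> SS (SS g) = SS g"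
proof -
  assume g: "g \<in> tspace N"
  have "SS (\<lambda>v. g v - SS g v) = (\<lambda>_. 0)" by (rule SS_X[OF SS_resid[OF g]])
  hence "(\<lambda>v. SS g v - SS (SS g) v) = (\<lambda>_. 0)" unfolding S_op_def lin_ext_diff .
  thus ?thesis by (auto simp: fun_eq_iff)
qed

end




context
  fixes R :: "('a::{finite,linorder} list \<Rightarrow> 'k::field) set" and N :: nat
  assumes RP: "reduced_hom_pres N R"
begin

definition sl :: "'a list \<Rightarrow> 'a list \<Rightarrow> ('a list \<Rightarrow> 'k) \<Rightarrow> 'a list \<Rightarrow> 'k" where
  "sl u z f = (\<lambda>x. if length x = N then f (u @ x @ z) else 0)"

lemma sl_t: "sl u z f \<in> tspace N" by (simp add: sl_def tspace_def)

lemma img_eval: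
  "tens i (wd (take i w)) (tens N (S_img R (take N (drop i w))) (wd (drop (i + N) w))) v
   = wd (take i w) (take i v) * (S_img R (take N (drop i w)) (take N (drop i v)) * wd (drop (i + N) w) (drop (i + N) v))"
  by (simp add: tens_def add.commute)

lemma SI_len:
  assumes im: "i + N \<le> m" and v: "length v \<noteq> m"
  shows "S_i N R m i f v = 0"
  unfolding S_i_def lin_ext_def
proof (rule sum.neutral, rule ballI)
  fix w :: "'a list" assume w: "w \<in> {w. length w = m}"
  let ?y0 = "take N (drop i w)"
  have ly0: "length ?y0 = N" using w im by simp
  have "wd (take i w) (take i v) * (S_img R ?y0 (take N (drop i v)) * wd (drop (i + N) w) (drop (i + N) v)) = 0"
  proof (rule ccontr)
    assume ne: "\<not> ?thesis"
    hence a: "take i v = take i w" "S_img R ?y0 (take N (drop i v)) \<noteq> 0" "drop (i + N) v = drop (i + N) w"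
      by (auto simp: wd_def split: if_splits)
    have "length (take N (drop i v)) = N"
      using tspace_len[OF S_img_t[OF RP ly0] a(2)] .
    moreover have "N \<ge> 2" using RP by (simp add: reduced_hom_pres_def)
    ultimately have "length v \<ge> i + N" by (simp add: min_def split: if_splits)
    moreover have "length (drop (i + N) v) = m - (i + N)" using a(3) w by simp
    ultimately show False using v im by auto
  qed
  thus "f w * tens i (wd (take i w)) (tens N (S_img R (take N (drop i w))) (wd (drop (i + N) w))) v = 0"
    unfolding img_eval by simp
qed

lemma SI_eval:
  assumes im: "i + N \<le> m" and u: "length u = i" and y: "length y = N" and z: "length z = m - i - N"
  shows "S_i N R m i f (u @ y @ z) = S_op N R (sl u z f) y"
proof -
  let ?img = "\<lambda>w. tens i (wd (take i w)) (tens N (S_img R (take N (drop i w))) (wd (drop (i + N) w)))"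
  define G where "G w = f w * ?img w (u @ y @ z)" for w
  have Geq: "G w = f w * (wd (take i w) u * (S_img R (take N (drop i w)) y * wd (drop (i + N) w) z))" for w
    unfolding G_def img_eval using u y by simp
  have inj: "inj_on (\<lambda>x. u @ x @ z) {x. length x = N}" by (rule inj_onI) simp
  have sub: "(\<lambda>x. u @ x @ z) ` {x. length x = N} \<subseteq> {w. length w = m}" using u z im by auto
  have "S_i N R m i f (u @ y @ z) = (\<Sum>w\<in>{w. length w = m}. G w)"
    unfolding S_i_def lin_ext_def G_def by simp
  also have "\<dots> = (\<Sum>w\<in>(\<lambda>x. u @ x @ z) ` {x. length x = N}. G w)"
  proof (rule sum.mono_neutral_right[OF finite_words sub], rule ballI)
    fix w assume w: "w \<in> {w. length w = m} - (\<lambda>x. u @ x @ z) ` {x. length x = N}"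
    show "G w = 0"
    proof (rule ccontr)
      assume "G w \<noteq> 0"
      hence a: "take i w = u" "drop (i + N) w = z" unfolding Geq by (auto simp: wd_def split: if_splits)
      have "w = take i w @ take N (drop i w) @ drop (i + N) w" "length (take N (drop i w)) = N"
        using split3[of w m i N] w im by auto
      hence "w \<in> (\<lambda>x. u @ x @ z) ` {x. length x = N}" using a by (metis (mono_tags) image_eqI mem_Collect_eq)
      thus False using w by blast
    qed
  qed
  also have "\<dots> = (\<Sum>x\<in>{x. length x = N}. G (u @ x @ z))"
    by (simp add: sum.reindex[OF inj])
  also have "\<dots> = (\<Sum>x\<in>{x. length x = N}. sl u z f x * S_img R x y)"
  proof (intro sum.cong refl)
    fix x :: "'a list" assume x: "x \<in> {x. length x = N}"
    have "take i (u @ x @ z) = u" "take N (drop i (u @ x @ z)) = x" "drop (i + N) (u @ x @ z) = z"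
      using u x by auto
    thus "G (u @ x @ z) = sl u z f x * S_img R x y" unfolding Geq sl_def using x by (simp add: wd_def)
  qed
  also have "\<dots> = S_op N R (sl u z f) y" by (simp add: S_op_def lin_ext_def)
  finally show ?thesis .
qed

lemma SI_t: "i + N \<le> m \<Longrightarrow> S_i N R m i f \<in> tspace m"
  using SI_len by (auto simp: tspace_def)

lemma sl_SI:
  assumes im: "i + N \<le> m" and u: "length u = i" and z: "length z = m - i - N"
  shows "sl u z (S_i N R m i f) = S_op N R (sl u z f)"
proof
  fix x show "sl u z (S_i N R m i f) x = S_op N R (sl u z f) x"
  proof (cases "length x = N")
    case True thus ?thesis using SI_eval[OF im u True z] by (simp add: sl_def)
  next
    case False thus ?thesis using SS_t[OF RP] by (simp add: sl_def tspace_def)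
  qed
qed

lemma SI_ext:
  assumes im: "i + N \<le> m" and g: "g \<in> tspace m" and h: "h \<in> tspace m"
    and eq: "\<And>u y z. length u = i \<Longrightarrow> length y = N \<Longrightarrow> length z = m - i - N \<Longrightarrow> g (u @ y @ z) = h (u @ y @ z)"
  shows "g = h"
proof
  fix v show "g v = h v"
  proof (cases "length v = m")
    case True
    note sp = split3[OF True im]
    show ?thesis using eq[OF sp(2-4)] sp(1) by metis
  next
    case False thus ?thesis using g h by (simp add: tspace_def)
  qed
qed

lemma SI_ker:
  assumes im: "i + N \<le> m"
  shows "kerop m (S_i N R m i) = ms m i N (lin_span R)"
proof
  show "kerop m (S_i N R m i) \<subseteq> ms m i N (lin_span R)"
  proof
    fix f assume "f \<in> kerop m (S_i N R m i)"
    hence f: "f \<in> tspace m" "S_i N R m i f = (\<lambda>_. 0)" by (auto simp: kerop_def)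
    have "sl u z f \<in> lin_span R" if u: "length u = i" and z: "length z = m - i - N" for u z
    proof -
      have "S_op N R (sl u z f) = sl u z (S_i N R m i f)" using sl_SI[OF im u z] by simp
      also have "\<dots> = (\<lambda>_. 0)" using f(2) by (simp add: sl_def)
      finally show ?thesis using SS_ker[OF RP sl_t] by simp
    qed
    thus "f \<in> ms m i N (lin_span R)" using f(1) by (simp add: ms_def sl_def)
  qed
next
  show "ms m i N (lin_span R) \<subseteq> kerop m (S_i N R m i)"
  proof
    fix f assume f: "f \<in> ms m i N (lin_span R)"
    have ft: "f \<in> tspace m" using f by (simp add: ms_def)
    have "S_i N R m i f = (\<lambda>_. 0)"
    proof (rule SI_ext[OF im SI_t[OF im] closed_zero[OF closed_tspace]])
      fix u y z :: "'a list" assume u: "length u = i" and y: "length y = N" and z: "length z = m - i - N"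
      have "sl u z f \<in> lin_span R" using f u z by (simp add: ms_def sl_def)
      hence "S_op N R (sl u z f) = (\<lambda>_. 0)" using SS_ker[OF RP sl_t] by simp
      thus "S_i N R m i f (u @ y @ z) = 0" using SI_eval[OF im u y z] by simp
    qed
    thus "f \<in> kerop m (S_i N R m i)" using ft by (simp add: kerop_def)
  qed
qed

lemma SI_red:
  assumes im: "i + N \<le> m"
  shows "is_red_op m (S_i N R m i)"
  unfolding is_red_op_def
proof (intro conjI ballI allI impI)
  fix f :: "'a list \<Rightarrow> 'k" show "S_i N R m i f \<in> tspace m" by (rule SI_t[OF im])
next
  fix f g :: "'a list \<Rightarrow> 'k"
  show "S_i N R m i (\<lambda>v. f v + g v) = (\<lambda>v. S_i N R m i f v + S_i N R m i g v)"
    unfolding S_i_def by (rule lin_ext_add)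
next
  fix c :: 'k and f :: "'a list \<Rightarrow> 'k"
  show "S_i N R m i (\<lambda>v. c * f v) = (\<lambda>v. c * S_i N R m i f v)"
    unfolding S_i_def by (rule lin_ext_smult)
next
  fix f :: "'a list \<Rightarrow> 'k" assume f: "f \<in> tspace m"
  show "S_i N R m i (S_i N R m i f) = S_i N R m i f"
  proof (rule SI_ext[OF im SI_t[OF im] SI_t[OF im]])
    fix u y z :: "'a list" assume u: "length u = i" and y: "length y = N" and z: "length z = m - i - N"
    have "S_i N R m i (S_i N R m i f) (u @ y @ z) = S_op N R (S_op N R (sl u z f)) y"
      using SI_eval[OF im u y z] sl_SI[OF im u z] by simp
    also have "\<dots> = S_op N R (sl u z f) y" using SS_idem[OF RP sl_t] by simp
    also have "\<dots> = S_i N R m i f (u @ y @ z)" using SI_eval[OF im u y z] by simp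
    finally show "S_i N R m i (S_i N R m i f) (u @ y @ z) = S_i N R m i f (u @ y @ z)" .
  qed
next
  fix w :: "'a list" assume lw: "length w = m"
  note sw = split3[OF lw im]
  define y0 where "y0 = take N (drop i w)"
  have ly0: "length y0 = N" using sw unfolding y0_def by simp
  have slw: "sl u z (wd w) = (if u = take i w \<and> z = drop (i + N) w then wd y0 else (\<lambda>_. 0))"
    if u: "length u = i" and z: "length z = m - i - N" for u z
  proof
    fix x show "sl u z (wd w) x = (if u = take i w \<and> z = drop (i + N) w then wd y0 else (\<lambda>_. 0)) x"
    proof (cases "length x = N")
      case True
      have "(u @ x @ z = w) \<longleftrightarrow> (u = take i w \<and> x = y0 \<and> z = drop (i + N) w)"
      proof
        assume "u @ x @ z = w" thus "u = take i w \<and> x = y0 \<and> z = drop (i + N) w"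
          using u True unfolding y0_def by auto
      next
        assume "u = take i w \<and> x = y0 \<and> z = drop (i + N) w"
        thus "u @ x @ z = w" using sw(1) unfolding y0_def by simp
      qed
      thus ?thesis using True by (auto simp: sl_def wd_def)
    next
      case False thus ?thesis using ly0 by (auto simp: sl_def wd_def)
    qed
  qed
  have SIw: "S_i N R m i (wd w) (u @ y @ z) = (if u = take i w \<and> z = drop (i + N) w then S_img R y0 y else 0)"
    if u: "length u = i" and y: "length y = N" and z: "length z = m - i - N" for u y z
  proof -
    have "S_i N R m i (wd w) (u @ y @ z) = S_op N R (sl u z (wd w)) y" by (rule SI_eval[OF im u y z])
    also have "\<dots> = (if u = take i w \<and> z = drop (i + N) w then S_img R y0 y else 0)"
    proof (cases "u = take i w \<and> z = drop (i + N) w")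
      case True thus ?thesis using slw[OF u z] SS_wd[OF RP ly0] by simp
    next
      case False
      have "S_op N R (\<lambda>_. 0) = (\<lambda>_. 0)" unfolding S_op_def lin_ext_def by simp
      hence "S_op N R (sl u z (wd w)) y = 0" using slw[OF u z] False by simp
      thus ?thesis using False by auto
    qed
    finally show ?thesis .
  qed
  show "S_i N R m i (wd w) = wd w \<or> (\<forall>v. S_i N R m i (wd w) v \<noteq> 0 \<longrightarrow> v < w)"
  proof (cases "\<exists>f\<in>R. lm f = y0")
    case False
    have "S_i N R m i (wd w) = wd w"
    proof (rule SI_ext[OF im SI_t[OF im] wd_tspace[OF lw]])
      fix u y z :: "'a list" assume u: "length u = i" and y: "length y = N" and z: "length z = m - i - N"
      have "(u @ y @ z = w) \<longleftrightarrow> (u = take i w \<and> y = y0 \<and> z = drop (i + N) w)"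
      proof
        assume "u @ y @ z = w" thus "u = take i w \<and> y = y0 \<and> z = drop (i + N) w"
          using u y unfolding y0_def by auto
      next
        assume "u = take i w \<and> y = y0 \<and> z = drop (i + N) w"
        thus "u @ y @ z = w" using sw(1) unfolding y0_def by simp
      qed
      thus "S_i N R m i (wd w) (u @ y @ z) = wd w (u @ y @ z)"
        using SIw[OF u y z] S_img_nlm[OF RP False] by (auto simp: wd_def)
    qed
    thus ?thesis by simp
  next
    case True
    then obtain f0 where f0: "f0 \<in> R" "lm f0 = y0" by blast
    have "\<forall>v. S_i N R m i (wd w) v \<noteq> 0 \<longrightarrow> v < w"
    proof (intro allI impI)
      fix v assume ne: "S_i N R m i (wd w) v \<noteq> 0"
      have lv: "length v = m" using ne SI_len[OF im] by blast
      note sv = split3[OF lv im]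
      define u where "u = take i v"
      define y where "y = take N (drop i v)"
      define z where "z = drop (i + N) v"
      have v: "v = u @ y @ z" "length u = i" "length y = N" "length z = m - i - N"
        using sv unfolding u_def y_def z_def by auto
      have ne2: "(if u = take i w \<and> z = drop (i + N) w then S_img R y0 y else 0) \<noteq> 0"
        using ne SIw[OF v(2-4)] v(1) by simp
      hence uz: "u = take i w" "z = drop (i + N) w" by (auto split: if_splits)
      have Sy: "S_img R y0 y \<noteq> 0" using ne2 uz by simp
      hence Sy': "wd y0 y - f0 y \<noteq> 0" using S_img_lm[OF RP f0(1)] f0(2) by simp
      have "y \<noteq> y0" using Sy' R_lm(1)[OF RP f0(1)] f0(2) by (auto simp: wd_def)
      hence "f0 y \<noteq> 0" using Sy' by (simp add: wd_def)
      hence "y \<le> y0" using R_lm(3)[OF RP f0(1)] f0(2) by simp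
      hence "y < y0" using \<open>y \<noteq> y0\<close> by simp
      hence "u @ y @ z < u @ y0 @ z" using v(3) ly0 by (intro lex_app) auto
      moreover have "w = u @ y0 @ z" using sw(1) uz unfolding y0_def by simp
      ultimately show "v < w" using v(1) by simp
    qed
    thus ?thesis by simp
  qed
qed

end




lemma lN_2: "lN N (n + 2) = lN N n + N"
  by (simp add: lN_def)

lemma lN_ge: "1 \<le> n \<Longrightarrow> N \<le> lN N (n + 1)"
proof -
  assume n: "1 \<le> n"
  have "1 \<le> (n + 1) div 2" using n by simp
  hence a: "1 * N \<le> (n + 1) div 2 * N" by (rule mult_le_mono1)
  have b: "(n + 1) div 2 * N \<le> lN N (n + 1)" by (simp add: lN_def)
  show ?thesis using le_trans[OF a b] by simp
qed

lemma lN_two: "lN N 2 = N" by (simp add: lN_def)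

lemma ms_N: "subsp N X \<Longrightarrow> ms N 0 N X = X"
proof -
  assume X: "subsp N X"
  have Xt: "X \<subseteq> tspace N" using X by (simp add: subsp_def)
  have e: "(\<lambda>x. if length x = N then f x else 0) = f" if "f \<in> tspace N" for f :: "'a list \<Rightarrow> 'b"
    using that by (intro ext) (simp add: tspace_def)
  show ?thesis
  proof
    show "ms N 0 N X \<subseteq> X"
    proof
      fix f assume f: "f \<in> ms N 0 N X"
      have ft: "f \<in> tspace N" using f by (simp add: ms_def)
      have "(\<lambda>x. if length x = N then f ([] @ x @ []) else 0) \<in> X" using f by (simp add: ms_def)
      hence "(\<lambda>x. if length x = N then f x else 0) \<in> X" by (simp only: append_Nil append_Nil2)
      thus "f \<in> X" by (simp only: e[OF ft])
    qed
  next
    show "X \<subseteq> ms N 0 N X"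
    proof
      fix f assume f: "f \<in> X"
      hence ft: "f \<in> tspace N" using Xt by blast
      thus "f \<in> ms N 0 N X" using f e[OF ft] by (simp add: ms_def cong: if_cong)
    qed
  qed
qed

lemma subsp_INTER:
  assumes I: "I \<noteq> {}" and F: "\<And>i. i \<in> I \<Longrightarrow> subsp m (F i)"
  shows "subsp m (\<Inter> (F ` I))"
proof -
  have c: "\<And>i. i \<in> I \<Longrightarrow> closed (F i)" and t: "\<And>i. i \<in> I \<Longrightarrow> F i \<subseteq> tspace m"
    using F by (auto simp: subsp_def)
  have "closed (\<Inter> (F ` I))"
    unfolding closed_def
  proof (intro conjI ballI allI)
    show "(\<lambda>_. 0) \<in> \<Inter> (F ` I)" using closed_zero[OF c] by simp
  next
    fix f g assume "f \<in> \<Inter> (F ` I)" "g \<in> \<Inter> (F ` I)"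
    thus "(\<lambda>v. f v + g v) \<in> \<Inter> (F ` I)" using closed_add[OF c] by simp
  next
    fix c' f assume "f \<in> \<Inter> (F ` I)"
    thus "(\<lambda>v. c' * f v) \<in> \<Inter> (F ` I)" using closed_smult[OF c] by simp
  qed
  moreover obtain i0 where "i0 \<in> I" using I by blast
  hence "\<Inter> (F ` I) \<subseteq> tspace m" using t by blast
  ultimately show ?thesis by (simp add: subsp_def)
qed

theorem lemma4p1p3:
  fixes R :: "('a::{finite,linorder} list \<Rightarrow> 'k::field) set" and N :: nat
  assumes "reduced_hom_pres N R"
  shows "(\<forall>n m. lN N (n + 2) \<le> m \<longrightarrow>
            (\<forall>f\<in>tspace m. F1 N R n m f =
               big_meet m (map (S_i N R m) [0..<m - lN N (n + 2) + 1]) f))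
       \<and> (\<forall>n m. 1 \<le> n \<longrightarrow> lN N (n + 1) \<le> m \<longrightarrow>
            (\<forall>f\<in>tspace m. F2 N R n m f =
               big_join m (map (S_i N R m) [m - lN N (n + 1)..<m - N + 1]) f))"
proof -
  note RP = assms
  define X where "X = lin_span R"
  have X: "subsp N X" unfolding X_def by (rule lin_span_subsp[OF R_t[OF RP]])
  have Xc: "closed X" using X by (simp add: subsp_def)
  show ?thesis
  proof (intro conjI allI impI ballI)
    fix n m and f :: "'a list \<Rightarrow> 'k"
    assume nm: "lN N (n + 2) \<le> m" and f: "f \<in> tspace m"
    define l where "l = lN N n"
    define j where "j = m - l"
    have jN: "N \<le> j" and jl: "j + l = m" and e1: "m - lN N (n + 2) = j - N"
      using nm lN_2[of N n] unfolding j_def l_def by auto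
    let ?is = "[0..<j - N + 1]"
    let ?Ts = "map (S_i N R m) ?is"
    have ne: "?Ts \<noteq> []" by simp
    have red: "\<forall>T\<in>set ?Ts. is_red_op m T" using SI_red[OF RP] jN jl by auto
    note BM = big_meet_prop[OF ne red]
    have k1: "kerop m (big_meet m ?Ts) = lsum (map (kerop m) ?Ts)" using BM by simp
    have k2: "map (kerop m) ?Ts = map (\<lambda>i. ms m i N X) ?is"
      using SI_ker[OF RP] jN jl unfolding X_def by auto
    have kBM: "kerop m (big_meet m ?Ts) = lsum (map (\<lambda>i. ms m i N X) ?is)"
      by (simp only: k1 k2)
    have i1: "IR N R j = lin_span (\<Union>i\<in>{0..j - N}. tensp i (tspace i) (tensp N X (tspace (j - N - i))))"
      using jN unfolding IR_def X_def by simp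
    have i2: "(\<Union>i\<in>{0..j - N}. tensp i (tspace i) (tensp N X (tspace (j - N - i)))) = \<Union> (set (map (\<lambda>i. ms j i N X) ?is))"
    proof -
      have a: "(\<Union>i\<in>{0..j - N}. tensp i (tspace i) (tensp N X (tspace (j - N - i)))) = (\<Union>i\<in>{0..j - N}. ms j i N X)"
      proof (rule SUP_cong[OF refl])
        fix i assume "i \<in> {0..j - N}"
        thus "tensp i (tspace i) (tensp N X (tspace (j - N - i))) = ms j i N X"
          using ms_K[OF X, of i j] jN by auto
      qed
      have b0: "set ?is = {0..j - N}" by auto
      have b: "set (map (\<lambda>i. ms j i N X) ?is) = (\<lambda>i. ms j i N X) ` {0..j - N}"
        by (simp only: set_map b0)
      show ?thesis unfolding a b ..
    qed
    have i3: "lin_span (\<Union> (set (map (\<lambda>i. ms j i N X) ?is))) = lsum (map (\<lambda>i. ms j i N X) ?is)"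
      by (rule lin_span_lsum) (auto intro: ms_subsp[OF Xc])
    have IRe: "IR N R j = lsum (map (\<lambda>i. ms j i N X) ?is)"
      by (simp only: i1 i2 i3)
    have IRs: "subsp j (IR N R j)" unfolding IRe by (rule lsum_subsp) (auto intro: ms_subsp[OF Xc])
    have w1: "tensp j (IR N R j) (tspace l) = RS j l (IR N R j)" by (rule tensp_RS[OF IRs])
    have w2: "RS j l (IR N R j) = lsum (map (RS j l) (map (\<lambda>i. ms j i N X) ?is))"
      unfolding IRe by (rule RS_lsum) (auto intro: ms_subsp[OF Xc])
    have w3: "map (RS j l) (map (\<lambda>i. ms j i N X) ?is) = map (\<lambda>i. ms m i N X) ?is"
      using RS_ms[of _ N j l X] jN jl by auto
    have We: "tensp j (IR N R j) (tspace l) = lsum (map (\<lambda>i. ms m i N X) ?is)"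
      by (simp only: w1 w2 w3)
    have Ws: "subsp m (lsum (map (\<lambda>i. ms m i N X) ?is))" by (rule lsum_subsp) (auto intro: ms_subsp[OF Xc])
    have "F1 N R n m = theta_inv m (tensp j (IR N R j) (tspace l))"
      unfolding F1_def j_def l_def ..
    hence "F1 N R n m = theta_inv m (lsum (map (\<lambda>i. ms m i N X) ?is))"
      by (simp only: We)
    hence TF: "is_red_op m (F1 N R n m)" "kerop m (F1 N R n m) = lsum (map (\<lambda>i. ms m i N X) ?is)"
      using theta_inv_prop[OF Ws] by auto
    have "F1 N R n m f = big_meet m ?Ts f"
      by (rule red_unique[OF TF(1) conjunct1[OF BM] _ f]) (simp only: TF(2) kBM)
    thus "F1 N R n m f = big_meet m (map (S_i N R m) [0..<m - lN N (n + 2) + 1]) f" by (simp only: e1)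
  next
    fix n m and f :: "'a list \<Rightarrow> 'k"
    assume n1: "1 \<le> n" and nm: "lN N (n + 1) \<le> m" and f: "f \<in> tspace m"
    define L where "L = lN N (n + 1)"
    define a where "a = m - L"
    have LN: "N \<le> L" using lN_ge[OF n1] unfolding L_def by simp
    have aL: "a + L = m" using nm unfolding a_def L_def by simp
    let ?is = "[a..<m - N + 1]"
    let ?Ts = "map (S_i N R m) ?is"
    have ne: "?Ts \<noteq> []" using LN aL by simp
    have red: "\<forall>T\<in>set ?Ts. is_red_op m T" using SI_red[OF RP] LN aL by auto
    note BJ = big_join_prop[OF ne red]
    have "kerop m (big_join m ?Ts) = \<Inter> (kerop m ` set ?Ts)" using BJ by simp
    also have "\<dots> = (\<Inter>i\<in>{a..m - N}. ms m i N X)"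
    proof -
      have "set ?Ts = S_i N R m ` {a..m - N}" using LN aL by auto
      moreover have "kerop m (S_i N R m i) = ms m i N X" if "i \<in> {a..m - N}" for i
        using SI_ker[OF RP, of i m] that LN aL unfolding X_def by auto
      ultimately show ?thesis by auto
    qed
    finally have kBJ: "kerop m (big_join m ?Ts) = (\<Inter>i\<in>{a..m - N}. ms m i N X)" .
    have Je: "J N R (n + 1) = (\<Inter>i\<in>{0..L - N}. ms L i N X)"
    proof (cases "n + 1 = 2")
      case True
      have "L = N" unfolding L_def True by (rule lN_two)
      thus ?thesis using True ms_N[OF X] unfolding J_def X_def by simp
    next
      case False
      hence "J N R (n + 1) = (\<Inter>i\<in>{0..L - N}. tensp i (tspace i) (tensp N X (tspace (L - N - i))))"
        using n1 unfolding J_def X_def L_def by simp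
      also have "\<dots> = (\<Inter>i\<in>{0..L - N}. ms L i N X)"
        using ms_K[OF X] LN by (intro INF_cong refl) auto
      finally show ?thesis .
    qed
    have Js: "subsp L (J N R (n + 1))" unfolding Je
      by (rule subsp_INTER) (auto intro: ms_subsp[OF Xc])
    have "tensp a (tspace a) (J N R (n + 1)) = LS a L (J N R (n + 1))" by (rule tensp_LS[OF Js])
    also have "\<dots> = (\<Inter>i\<in>{0..L - N}. LS a L (ms L i N X))" unfolding Je by (rule LS_Inter) simp
    also have "\<dots> = (\<Inter>i\<in>{0..L - N}. ms m (a + i) N X)"
      using LS_ms[of _ N L a X] LN aL by (intro INF_cong refl) auto
    also have "\<dots> = (\<Inter>i\<in>{a..m - N}. ms m i N X)"
    proof -
      have "(\<lambda>i. a + i) ` {0..L - N} = {a..m - N}" using LN aL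
        by (auto simp: image_iff intro!: exI[of _ "x - a" for x])
      hence "(\<Inter>i\<in>{a..m - N}. ms m i N X) = (\<Inter>i\<in>(\<lambda>i. a + i) ` {0..L - N}. ms m i N X)" by simp
      also have "\<dots> = (\<Inter>i\<in>{0..L - N}. ms m (a + i) N X)" by (simp only: image_image)
      finally show ?thesis by simp
    qed
    finally have We: "tensp a (tspace a) (J N R (n + 1)) = (\<Inter>i\<in>{a..m - N}. ms m i N X)" .
    have Ws: "subsp m (\<Inter>i\<in>{a..m - N}. ms m i N X)"
      using LN aL by (intro subsp_INTER ms_subsp[OF Xc]) auto
    have "F2 N R n m = theta_inv m (\<Inter>i\<in>{a..m - N}. ms m i N X)"
      unfolding F2_def using We nm unfolding a_def L_def by simp
    hence TF: "is_red_op m (F2 N R n m)" "kerop m (F2 N R n m) = (\<Inter>i\<in>{a..m - N}. ms m i N X)"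
      using theta_inv_prop[OF Ws] by auto
    have "F2 N R n m f = big_join m ?Ts f"
      by (rule red_unique[OF TF(1) conjunct1[OF BJ] _ f]) (simp only: TF(2) kBJ)
    thus "F2 N R n m f = big_join m (map (S_i N R m) [m - lN N (n + 1)..<m - N + 1]) f"
      unfolding a_def L_def by simp
  qed
qed


end
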